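(* Two admissible families of weights $\alpha,\beta$ on $\mathcal P$ coincide if and only if they have the same basic coefficients, i.e. $\nu_{\mathsf q}(\alpha)=\nu_{\mathsf q}(\beta)$, $\xi_{\mathsf q}(\alpha)=\xi_{\mathsf q}(\beta)$, $\nu_{\mathsf q\mathsf Q}(\alpha)=\nu_{\mathsf q\mathsf Q}(\beta)$ and $\xi_{\mathsf q\mathsf Q}(\alpha)=\xi_{\mathsf q\mathsf Q}(\beta)$ for all $\mathsf q,\mathsf Q\in\mathcal F$.
   Context: Fix a finite set $\mathcal F$ of faces. For a word $\mathbf f\in\mathcal F^n$ ($n\ge1$), $[n]_{\mathbf f}$ is $\{1,\dots,n\}$ with faces $\ell\mapsto\mathbf f(\ell)$ (legs); $\mathcal P(\mathbf f)$ is the set of set partitions of $[n]$ viewed with these faces, $\mathcal P=\bigcup_{\mathbf f}\mathcal P(\mathbf f)$. A finite totally ordered set $S$ with a face map is identified with $[m]_{|S|}$ through the order-preserving bijection ($|S|$ = word of faces read in order), so partitions of such sets are elements of $\mathcal P$. $1_{\mathbf f}$ is the one-block partition. For blocks $\beta_1\ne\beta_2$ of $\pi$, $\pi_{\beta_1\smile\beta_2}=(\pi\setminus\{\beta_1,\beta_2\})\cup\{\beta_1\cup\beta_2\}$, and $\{\beta_1,\beta_2\}$ is regarded as a partition of the multi-faced set $\beta_1\cup\beta_2$. Reduction: for $\pi\in\mathcal P(\mathbf f)$ let $s\sim t$ ($s\le t$) iff all $r\in[s,t]$ have the same face and lie in the same block; $\pi_{\mathrm{red}}$ is the induced partition of $[n]/\sim$.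 Mirror: $\overline{\mathbf f}(i)=\mathbf f(n+1-i)$, $\overline\pi=\{\{n+1-i:i\in\beta\}:\beta\in\pi\}$. Admissible: $\alpha=(\alpha_\pi)_{\pi\in\mathcal P}\subset\mathbb C$ with (i) $\alpha_{1_{\mathbf f}}=1$; (ii) $\alpha_{\{\{1\},\{2\}\}}=1$ for every $\mathbf f\in\mathcal F^2$; (iii) $\alpha_\pi=\alpha_{\pi_{\mathrm{red}}}$; (iv) if $\pi\in\mathcal P(\mathbf f)$ has blocks $\beta_1\ne\beta_2$ with $i\in\beta_1$, $i+1\in\beta_2$, $\mathbf f(i)=\mathbf f(i+1)$, then $\alpha_\pi=\alpha_{\pi_{\beta_1\smile\beta_2}}\alpha_{\{\beta_1,\beta_2\}}$; (v) $\alpha_\pi=\alpha_\sigma$ whenever $\pi\in\mathcal P(\mathbf f)$, $\sigma\in\mathcal P(\mathbf g)$ have the same set partition and $\mathbf f(\ell)=\mathbf g(\ell)$ for $1<\ell<n$; (vi) $\alpha_{\overline\pi}=\overline{\alpha_\pi}$. Basic coefficients of an admissible $\alpha$, for $\mathsf q,\mathsf Q\in\mathcal F$ (the faces of the first and last leg are arbitrary, which does not matter by (v)): $\nu_{\mathsf q}=\alpha_\pi$ for $\pi=\{\{1,3\},\{2\}\}$ with $\mathbf f(2)=\mathsf q$; $\xi_{\mathsf q}=\alpha_\pi$ for $\pi=\{\{1,3\},\{2,4\}\}$ with $\mathbf f(2)=\mathbf f(3)=\mathsf q$; $\nu_{\mathsf q\mathsf Q}=\alpha_\pi$ for $\pi=\{\{1,4\},\{2,3\}\}$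 with $\mathbf f(2)=\mathsf q$, $\mathbf f(3)=\mathsf Q$; $\xi_{\mathsf q\mathsf Q}=\alpha_\pi$ for $\pi=\{\{1,3\},\{2,4\}\}$ with $\mathbf f(2)=\mathsf q$, $\mathbf f(3)=\mathsf Q$. *)

theory Defs
  imports Complex_Main "HOL-Library.Disjoint_Sets"
begin

text \<open>Faces form a finite type 'f.  A multi-faced partition is a pair (w, pi):
  w is the word of faces (leg l has face w ! (l - 1), legs are 1..length w),
  pi is a set partition of {1..length w}.\<close>

type_synonym 'f mfpart = "'f list \<times> nat set set"

definition mfparts :: "('f::finite) mfpart set" where
  "mfparts = {(w, p). length w \<ge> 1 \<and> partition_on {1..length w} p}"

abbreviation face :: "'f list \<Rightarrow> nat \<Rightarrow> 'f" where
  "face w l \<equiv> w ! (l - 1)"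

text \<open>A subset S of the legs with a partition rho of S, regarded (via the
  order-preserving bijection S -> {1..card S}) as an element of P.\<close>
definition sub_part :: "'f list \<Rightarrow> nat set \<Rightarrow> nat set set \<Rightarrow> 'f mfpart" where
  "sub_part w S rho =
     (map (face w) (sorted_list_of_set S),
      (\<lambda>B. (\<lambda>i. card {j\<in>S. j < i} + 1) ` B) ` rho)"

definition one_block :: "'f list \<Rightarrow> 'f mfpart" where
  "one_block w = (w, {{1..length w}})"

definition red_sim :: "'f list \<Rightarrow> nat set set \<Rightarrow> nat \<Rightarrow> nat \<Rightarrow> bool" where
  "red_sim w p s t \<longleftrightarrow> s \<le> t \<and> (\<forall>r\<in>{s..t}. face w r = face w s) \<and> (\<exists>B\<in>p. {s..t} \<subseteq> B)"

text \<open>The ~-classes are intervals; each class is represented by its least element.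
  The reduced partition is the induced partition of the set of classes,
  ordered and faced via these representatives.\<close>
definition red_reps :: "'f list \<Rightarrow> nat set set \<Rightarrow> nat set" where
  "red_reps w p = {i \<in> {1..length w}. \<not> (i > 1 \<and> red_sim w p (i - 1) i)}"

definition reduce :: "'f mfpart \<Rightarrow> 'f mfpart" where
  "reduce x = (case x of (w, p) \<Rightarrow>
      sub_part w (red_reps w p) ((\<lambda>B. B \<inter> red_reps w p) ` p))"

definition merge_blocks :: "nat set set \<Rightarrow> nat set \<Rightarrow> nat set \<Rightarrow> nat set set" where
  "merge_blocks p b1 b2 = (p - {b1, b2}) \<union> {b1 \<union> b2}"

definition mirror :: "'f mfpart \<Rightarrow> 'f mfpart" where
  "mirror x = (case x of (w, p) \<Rightarrow>
      (rev w, (\<lambda>B. (\<lambda>i. length w + 1 - i) ` B) ` p))"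

definition admissible :: "(('f::finite) mfpart \<Rightarrow> complex) \<Rightarrow> bool" where
  "admissible a \<longleftrightarrow>
     (\<forall>w. length w \<ge> 1 \<longrightarrow> a (one_block w) = 1) \<and>
     (\<forall>x y. a ([x, y], {{1}, {2}}) = 1) \<and>
     (\<forall>x\<in>mfparts. a x = a (reduce x)) \<and>
     (\<forall>w p b1 b2 i. (w, p) \<in> mfparts \<longrightarrow> b1 \<in> p \<longrightarrow> b2 \<in> p \<longrightarrow> b1 \<noteq> b2 \<longrightarrow>
        i \<in> b1 \<longrightarrow> i + 1 \<in> b2 \<longrightarrow> face w i = face w (i + 1) \<longrightarrow>
        a (w, p) = a (w, merge_blocks p b1 b2) * a (sub_part w (b1 \<union> b2) {b1, b2})) \<and>
     (\<forall>w g p. (w, p) \<in> mfparts \<longrightarrow> length g = length w \<longrightarrow>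
        (\<forall>l. 1 < l \<and> l < length w \<longrightarrow> face w l = face g l) \<longrightarrow> a (w, p) = a (g, p)) \<and>
     (\<forall>x\<in>mfparts. a (mirror x) = cnj (a x))"

text \<open>Basic coefficients.  The first and last legs are given arbitrary fixed
  faces (those of the neighbouring inner leg); by (v) this choice is irrelevant.\<close>
definition nu1 :: "('f mfpart \<Rightarrow> complex) \<Rightarrow> 'f \<Rightarrow> complex" where
  "nu1 a q = a ([q, q, q], {{1, 3}, {2}})"

definition xi1 :: "('f mfpart \<Rightarrow> complex) \<Rightarrow> 'f \<Rightarrow> complex" where
  "xi1 a q = a ([q, q, q, q], {{1, 3}, {2, 4}})"

definition nu2 :: "('f mfpart \<Rightarrow> complex) \<Rightarrow> 'f \<Rightarrow> 'f \<Rightarrow> complex" where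
  "nu2 a q Q = a ([q, q, Q, Q], {{1, 4}, {2, 3}})"

definition xi2 :: "('f mfpart \<Rightarrow> complex) \<Rightarrow> 'f \<Rightarrow> 'f \<Rightarrow> complex" where
  "xi2 a q Q = a ([q, q, Q, Q], {{1, 3}, {2, 4}})"

end

theory Submission
  imports Defs
begin


definition mkp :: "('f \<times> 'l) list \<Rightarrow> 'f mfpart" where
  "mkp xs = (map fst xs, (\<lambda>c. {i\<in>{1..length xs}. snd (xs!(i-1)) = c}) ` snd ` set xs)"

lemma sorted_take_set:
  assumes "sorted_wrt (<) (L::nat list)" "k < length L"
  shows "{j\<in>set L. j < L!k} = set (take k L)"
proof -
  have "j \<in> set L \<and> j < L!k \<longleftrightarrow> j \<in> set (take k L)" for j
  proof
    assume "j \<in> set L \<and> j < L!k"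
    then obtain m where m: "m < length L" "L!m = j" "j < L!k" by (auto simp: in_set_conv_nth)
    have "m < k"
    proof (rule ccontr)
      assume "\<not> m < k"
      then have "k \<le> m" by simp
      then have "L!k \<le> L!m" using assms m
        by (metis le_eq_less_or_eq nless_le sorted_wrt_iff_nth_less)
      then show False using m by simp
    qed
    then show "j \<in> set (take k L)" using m by (auto simp: in_set_conv_nth)
  next
    assume "j \<in> set (take k L)"
    then obtain m where m: "m < k" "L!m = j" using assms(2) by (auto simp: in_set_conv_nth)
    then show "j \<in> set L \<and> j < L!k" using assms
      by (metis dual_order.strict_trans in_set_conv_nth sorted_wrt_nth_less)
  qed
  then show ?thesis by blast
qed

lemma card_less_nth:
  assumes "sorted_wrt (<) (L::nat list)" "k < length L"
  shows "card {j\<in>set L. j < L!k} = k"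
proof -
  have "distinct L" using assms(1) by (simp add: strict_sorted_iff)
  then have "distinct (take k L)" by simp
  then show ?thesis using sorted_take_set[OF assms] assms(2)
    by (simp add: distinct_card)
qed

lemma phi_image:
  fixes S :: "nat set"
  assumes "finite S"
  defines "L \<equiv> sorted_list_of_set S"
  shows "(\<lambda>i. card {j\<in>S. j < i} + 1) ` {i\<in>S. P i} = {k\<in>{1..length L}. P (L!(k-1))}"
proof -
  have sL: "set L = S" and st: "sorted_wrt (<) L" and len: "length L = card S"
    using assms by (auto simp: L_def strict_sorted_list_of_set)
  show ?thesis
  proof (intro equalityI subsetI)
    fix k assume "k \<in> (\<lambda>i. card {j\<in>S. j < i} + 1) ` {i\<in>S. P i}"
    then obtain i where i: "i \<in> S" "P i" "k = card {j\<in>S. j < i} + 1" by auto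
    obtain m where m: "m < length L" "L!m = i" using i sL by (metis in_set_conv_nth)
    have "card {j\<in>S. j < i} = m" using card_less_nth[OF st m(1)] m sL by simp
    then show "k \<in> {k\<in>{1..length L}. P (L!(k-1))}" using i m by auto
  next
    fix k assume "k \<in> {k\<in>{1..length L}. P (L!(k-1))}"
    then have k: "1 \<le> k" "k \<le> length L" "P (L!(k-1))" by auto
    have "card {j\<in>S. j < L!(k-1)} = k - 1" using card_less_nth[OF st, of "k-1"] k sL by simp
    moreover have "L!(k-1) \<in> S" using k sL by (metis Suc_le_eq diff_less less_le_trans nth_mem zero_less_one)
    ultimately show "k \<in> (\<lambda>i. card {j\<in>S. j < i} + 1) ` {i\<in>S. P i}"
      using k by (intro image_eqI[of _ _ "L!(k-1)"]) auto
  qed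
qed

lemma sub_part_mkp:
  assumes S: "S \<subseteq> {1..length xs}"
  defines "ys \<equiv> map (\<lambda>i. xs!(i-1)) (sorted_list_of_set S)"
  shows "sub_part (map fst xs) S ((\<lambda>c. {i\<in>S. snd(xs!(i-1)) = c}) ` C)
       = (map fst ys, (\<lambda>c. {k\<in>{1..length ys}. snd(ys!(k-1)) = c}) ` C)"
proof -
  have fin: "finite S" using S finite_subset by blast
  let ?L = "sorted_list_of_set S"
  have sL: "set ?L = S" using fin by simp
  have 1: "map (face (map fst xs)) ?L = map fst ys"
  proof -
    have "face (map fst xs) x = fst (xs ! (x - 1))" if "x \<in> set ?L" for x
    proof -
      have "x - 1 < length xs" using that S sL by force
      then show ?thesis by simp
    qed
    then show ?thesis unfolding ys_def by simp
  qed
  have 2: "(\<lambda>i. card {j\<in>S. j < i} + 1) ` {i\<in>S. snd(xs!(i-1)) = c}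
      = {k\<in>{1..length ys}. snd(ys!(k-1)) = c}" for c
    using phi_image[OF fin, of "\<lambda>i. snd(xs!(i-1)) = c"] unfolding ys_def by auto
  show ?thesis unfolding sub_part_def 1 using 2 by (auto simp: image_image)
qed


lemma sl_filter_upt: "sorted_list_of_set {i\<in>{1..n}. Q i} = filter Q [1..<Suc n]"
proof -
  have eq: "{i\<in>{1..n}. Q i} = set (filter Q [1..<Suc n])" by auto
  have "sorted (filter Q [1..<Suc n])" "distinct (filter Q [1..<Suc n])"
    by (auto simp del: upt_Suc intro: sorted_wrt_filter)
  then have "sorted_list_of_set (set (filter Q [1..<Suc n])) = filter Q [1..<Suc n]"
    by (simp only: sorted_list_of_set_sort_remdups distinct_remdups_id sorted_sort_id)
  then show ?thesis by (simp only: eq)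
qed

lemma map_nth_shift: "map (\<lambda>i. xs!(i-1)) [1..<Suc (length xs)] = xs"
proof -
  have "[1..<Suc (length xs)] = map Suc [0..<length xs]" by (simp add: map_Suc_upt del: upt_Suc)
  then show ?thesis by (simp add: map_nth o_def del: upt_Suc)
qed

lemma filter_positions:
  "map (\<lambda>i. xs!(i-1)) (sorted_list_of_set {i\<in>{1..length xs}. P (xs!(i-1))}) = filter P xs"
proof -
  have "map (\<lambda>i. xs!(i-1)) (sorted_list_of_set {i\<in>{1..length xs}. P (xs!(i-1))})
     = map (\<lambda>i. xs!(i-1)) (filter (\<lambda>i. P (xs!(i-1))) [1..<Suc (length xs)])"
    by (simp only: sl_filter_upt)
  also have "\<dots> = filter P (map (\<lambda>i. xs!(i-1)) [1..<Suc (length xs)])"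
    by (simp only: filter_map o_def)
  also have "\<dots> = filter P xs" by (simp only: map_nth_shift)
  finally show ?thesis .
qed

abbreviation blk :: "('f \<times> 'l) list \<Rightarrow> 'l \<Rightarrow> nat set" where
  "blk xs c \<equiv> {i\<in>{1..length xs}. snd (xs!(i-1)) = c}"

lemma mkp_mfparts:
  assumes "xs \<noteq> []"
  shows "mkp xs \<in> mfparts"
proof -
  have "partition_on {1..length xs} ((\<lambda>c. blk xs c) ` snd ` set xs)"
  proof (rule partition_onI)
    show "\<Union> ((\<lambda>c. blk xs c) ` snd ` set xs) = {1..length xs}"
    proof (intro equalityI subsetI)
      fix i assume "i \<in> {1..length xs}"
      then have "xs!(i-1) \<in> set xs" by auto
      then show "i \<in> \<Union> ((\<lambda>c. blk xs c) ` snd ` set xs)" using \<open>i \<in> _\<close> by blast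
    qed auto
  next
    fix p q assume "p \<in> (\<lambda>c. blk xs c) ` snd ` set xs" "q \<in> (\<lambda>c. blk xs c) ` snd ` set xs" "p \<noteq> q"
    then show "disjnt p q" by (auto simp: disjnt_def)
  next
    show "{} \<notin> (\<lambda>c. blk xs c) ` snd ` set xs"
    proof
      assume "{} \<in> (\<lambda>c. blk xs c) ` snd ` set xs"
      then obtain z where z: "z \<in> set xs" "blk xs (snd z) = {}" by auto
      then obtain m where "m < length xs" "xs!m = z" by (metis in_set_conv_nth)
      then have "Suc m \<in> blk xs (snd z)" by auto
      then show False using z by auto
    qed
  qed
  then show ?thesis using assms by (simp add: mfparts_def mkp_def Suc_le_eq)
qed

lemma mkp_filter:
  "sub_part (map fst xs) {i\<in>{1..length xs}. snd (xs!(i-1)) \<in> C} ((\<lambda>c. blk xs c) ` C)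
   = mkp (filter (\<lambda>z. snd z \<in> C) xs)" if "C \<subseteq> snd ` set xs"
proof -
  let ?S = "{i\<in>{1..length xs}. snd (xs!(i-1)) \<in> C}"
  have e: "(\<lambda>c. blk xs c) ` C = (\<lambda>c. {i\<in>?S. snd (xs!(i-1)) = c}) ` C" by auto
  have ys: "map (\<lambda>i. xs!(i-1)) (sorted_list_of_set ?S) = filter (\<lambda>z. snd z \<in> C) xs"
    using filter_positions[where P="\<lambda>z. snd z \<in> C" and xs=xs] by simp
  have C: "snd ` set (filter (\<lambda>z. snd z \<in> C) xs) = C" using that by auto
  have sub: "?S \<subseteq> {1..length xs}" by auto
  show ?thesis unfolding e sub_part_mkp[OF sub] ys mkp_def C ..
qed


lemma remdups_adj_pos0:
  "remdups_adj xs = map (nth xs) (filter (\<lambda>i. i = 0 \<or> xs!(i-1) \<noteq> xs!i) [0..<length xs])"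
proof (induction xs)
  case Nil then show ?case by simp
next
  case (Cons x xs)
  let ?Q = "\<lambda>i. i = 0 \<or> xs!(i-1) \<noteq> xs!i"
  have u: "[0..<Suc n] = 0 # map Suc [0..<n]" for n by (simp add: map_Suc_upt upt_conv_Cons del: upt_Suc)
  have r: "map (nth (x#xs)) (filter (\<lambda>i. i = 0 \<or> (x#xs)!(i-1) \<noteq> (x#xs)!i) [0..<length (x#xs)])
     = x # map (nth xs) (filter (\<lambda>i. (i = 0 \<and> x \<noteq> xs!0) \<or> (i > 0 \<and> ?Q i)) [0..<length xs])"
    by (simp only: length_Cons u) (auto simp: filter_map o_def nth_Cons' intro!: arg_cong[where f="map _"] filter_cong)
  show ?case
  proof (cases xs)
    case Nil then show ?thesis by simp
  next
    case (Cons y ys)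
    have u2: "[0..<length xs] = 0 # map Suc [0..<length ys]" using Cons u by simp
    show ?thesis
    proof (cases "x = y")
      case True
      have "remdups_adj (x#xs) = remdups_adj xs" using Cons True by simp
      also have "\<dots> = map (nth xs) (filter ?Q [0..<length xs])" by (rule Cons.IH)
      also have "\<dots> = x # map (nth xs) (filter (\<lambda>i. (i = 0 \<and> x \<noteq> xs!0) \<or> (i > 0 \<and> ?Q i)) [0..<length xs])"
        unfolding u2 using Cons True by (simp add: filter_map o_def)
      finally show ?thesis using r by simp
    next
      case False
      have "remdups_adj (x#xs) = x # remdups_adj xs" using Cons False by simp
      also have "remdups_adj xs = map (nth xs) (filter ?Q [0..<length xs])" by (rule Cons.IH)
      also have "filter ?Q [0..<length xs] = filter (\<lambda>i. (i = 0 \<and> x \<noteq> xs!0) \<or> (i > 0 \<and> ?Q i)) [0..<length xs]"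
        using Cons False by (auto intro!: filter_cong)
      finally show ?thesis using r by simp
    qed
  qed
qed

lemma remdups_adj_pos1:
  "map (\<lambda>i. xs!(i-1)) (filter (\<lambda>i. i = 1 \<or> xs!(i-2) \<noteq> xs!(i-1)) [1..<Suc (length xs)]) = remdups_adj xs"
proof -
  have "[1..<Suc (length xs)] = map Suc [0..<length xs]" by (simp add: map_Suc_upt del: upt_Suc)
  then show ?thesis unfolding remdups_adj_pos0[of xs]
    by (simp add: filter_map o_def del: upt_Suc)
qed

lemma blk_inj:
  assumes "c \<in> snd ` set xs" "blk xs c = blk xs d"
  shows "c = d"
proof -
  obtain z where "z \<in> set xs" "snd z = c" using assms by auto
  then obtain m where "m < length xs" "snd (xs!m) = c" by (metis in_set_conv_nth)
  then have "Suc m \<in> blk xs c" by auto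
  then have "Suc m \<in> blk xs d" by (rule subst[OF assms(2)])
  then show ?thesis using \<open>snd (xs!m) = c\<close> by simp
qed

lemma reduce_mkp: "reduce (mkp xs) = mkp (remdups_adj xs)"
proof -
  let ?w = "map fst xs" and ?p = "(\<lambda>c. blk xs c) ` snd ` set xs"
  let ?Q = "\<lambda>i. i = 1 \<or> xs!(i-2) \<noteq> xs!(i-1)"
  have rs: "red_sim ?w ?p (i-1) i \<longleftrightarrow> xs!(i-2) = xs!(i-1)" if "1 < i" "i \<le> length xs" for i
  proof -
    define j where "j = i - 2"
    have j: "i = Suc (Suc j)" unfolding j_def using that(1) by arith
    have jl: "Suc j < length xs" using that j by simp
    have ii: "{i-1..i} = {Suc j, Suc (Suc j)}" using j by auto
    have f: "face ?w (i-1) = fst (xs!j)" "face ?w i = fst (xs!(Suc j))" using j jl by auto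
    have "(\<exists>B\<in>?p. {Suc j, Suc (Suc j)} \<subseteq> B) \<longleftrightarrow> snd (xs!j) = snd (xs!(Suc j))"
    proof
      assume "\<exists>B\<in>?p. {Suc j, Suc (Suc j)} \<subseteq> B"
      then obtain c where "{Suc j, Suc (Suc j)} \<subseteq> blk xs c" by auto
      then show "snd (xs!j) = snd (xs!(Suc j))" by auto
    next
      assume a: "snd (xs!j) = snd (xs!(Suc j))"
      have "xs!(Suc j) \<in> set xs" using jl by auto
      moreover have "{Suc j, Suc (Suc j)} \<subseteq> blk xs (snd (xs!(Suc j)))" using jl a by auto
      ultimately show "\<exists>B\<in>?p. {Suc j, Suc (Suc j)} \<subseteq> B" by blast
    qed
    moreover have "xs!(i-2) = xs!j" "xs!(i-1) = xs!(Suc j)" using j by auto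
    moreover have "red_sim ?w ?p (i-1) i \<longleftrightarrow> face ?w (i-1) = face ?w i \<and> (\<exists>B\<in>?p. {Suc j, Suc (Suc j)} \<subseteq> B)"
      unfolding red_sim_def ii using j by auto
    ultimately show ?thesis unfolding f by (simp add: prod_eq_iff)
  qed
  have R: "red_reps ?w ?p = {i\<in>{1..length xs}. ?Q i}"
    unfolding red_reps_def using rs by auto
  let ?R = "{i\<in>{1..length xs}. ?Q i}"
  have e: "(\<lambda>B. B \<inter> ?R) ` ?p = (\<lambda>c. {i\<in>?R. snd (xs!(i-1)) = c}) ` snd ` set xs"
    by (auto simp: image_image)
  have sub: "?R \<subseteq> {1..length xs}" by auto
  have ys: "map (\<lambda>i. xs!(i-1)) (sorted_list_of_set ?R) = remdups_adj xs"
    by (simp only: sl_filter_upt remdups_adj_pos1)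
  have L: "snd ` set xs = snd ` set (remdups_adj xs)" by simp
  show ?thesis unfolding reduce_def mkp_def[of xs] prod.case
    unfolding R e
    unfolding sub_part_mkp[OF sub] ys
    unfolding L mkp_def ..
qed

definition rl :: "'l \<Rightarrow> 'l \<Rightarrow> ('f \<times> 'l) list \<Rightarrow> ('f \<times> 'l) list" where
  "rl a b xs = map (\<lambda>z. (fst z, if snd z = a then b else snd z)) xs"

lemma merge_mkp:
  assumes "a \<in> snd ` set xs" "b \<in> snd ` set xs" "a \<noteq> b"
  shows "mkp (rl a b xs) = (map fst xs, merge_blocks (snd (mkp xs)) (blk xs a) (blk xs b))"
proof -
  have len: "length (rl a b xs) = length xs" by (simp add: rl_def)
  have bl: "blk (rl a b xs) c = (if c = b then blk xs a \<union> blk xs b else if c = a then {} else blk xs c)" for c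
  proof -
    have s: "snd (rl a b xs ! (i-1)) = (if snd (xs!(i-1)) = a then b else snd (xs!(i-1)))"
      if "i \<in> {1..length xs}" for i using that by (auto simp: rl_def)
    have "i \<in> blk (rl a b xs) c \<longleftrightarrow> i \<in> (if c = b then blk xs a \<union> blk xs b else if c = a then {} else blk xs c)" for i
    proof (cases "i \<in> {1..length xs}")
      case True
      then show ?thesis using s[OF True] assms(3) len
        by (cases "snd (xs!(i-1)) = a"; cases "c = b"; cases "c = a"; simp)
    next
      case False then show ?thesis by (auto simp: len)
    qed
    then show ?thesis by blast
  qed
  have labs0: "snd ` set (rl a b xs) = (\<lambda>l. if l = a then b else l) ` (snd ` set xs)"
    by (simp only: rl_def set_map image_image snd_conv)
  have labs: "snd ` set (rl a b xs) = (snd ` set xs - {a}) \<union> {b}"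
    unfolding labs0
  proof (intro equalityI subsetI)
    fix l assume "l \<in> (\<lambda>l. if l = a then b else l) ` (snd ` set xs)"
    then obtain m where "m \<in> snd ` set xs" "l = (if m = a then b else m)" by blast
    then show "l \<in> (snd ` set xs - {a}) \<union> {b}" by (cases "m = a") auto
  next
    fix l assume l: "l \<in> (snd ` set xs - {a}) \<union> {b}"
    show "l \<in> (\<lambda>l. if l = a then b else l) ` (snd ` set xs)"
    proof (cases "l = b")
      case True then show ?thesis using assms(1) by (intro image_eqI[of _ _ a]) auto
    next
      case False then show ?thesis using l by (intro image_eqI[of _ _ l]) auto
    qed
  qed
  have "(\<lambda>c. blk (rl a b xs) c) ` snd ` set (rl a b xs)
      = (((\<lambda>c. blk xs c) ` snd ` set xs) - {blk xs a, blk xs b}) \<union> {blk xs a \<union> blk xs b}"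
  proof (intro equalityI subsetI)
    fix B assume "B \<in> (\<lambda>c. blk (rl a b xs) c) ` snd ` set (rl a b xs)"
    then obtain c where c: "c \<in> (snd ` set xs - {a}) \<union> {b}" "B = blk (rl a b xs) c" using labs by auto
    show "B \<in> (((\<lambda>c. blk xs c) ` snd ` set xs) - {blk xs a, blk xs b}) \<union> {blk xs a \<union> blk xs b}"
    proof (cases "c = b")
      case True then show ?thesis using c bl by auto
    next
      case False
      then have "c \<in> snd ` set xs" "c \<noteq> a" using c by auto
      have "blk xs c \<noteq> blk xs a"
      proof
        assume "blk xs c = blk xs a"
        then have "c = a" by (rule blk_inj[OF \<open>c \<in> snd ` set xs\<close>])
        with \<open>c \<noteq> a\<close> show False by simp
      qed
      moreover have "blk xs c \<noteq> blk xs b"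
      proof
        assume "blk xs c = blk xs b"
        then have "c = b" by (rule blk_inj[OF \<open>c \<in> snd ` set xs\<close>])
        with False show False by simp
      qed
      ultimately show ?thesis using c bl False \<open>c \<in> snd ` set xs\<close> \<open>c \<noteq> a\<close> by auto
    qed
  next
    fix B assume B: "B \<in> (((\<lambda>c. blk xs c) ` snd ` set xs) - {blk xs a, blk xs b}) \<union> {blk xs a \<union> blk xs b}"
    show "B \<in> (\<lambda>c. blk (rl a b xs) c) ` snd ` set (rl a b xs)"
    proof (cases "B = blk xs a \<union> blk xs b")
      case True
      then have "B = blk (rl a b xs) b" using bl by simp
      then show ?thesis using labs by auto
    next
      case False
      then have B2: "B \<in> (\<lambda>c. blk xs c) ` snd ` set xs" "B \<noteq> blk xs a" "B \<noteq> blk xs b" using B by auto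
      then obtain c where "c \<in> snd ` set xs" "B = blk xs c" by blast
      moreover then have "c \<noteq> a" "c \<noteq> b" using B2 by auto
      ultimately have "B = blk (rl a b xs) c" using bl by simp
      then show ?thesis using labs \<open>c \<in> snd ` set xs\<close> \<open>c \<noteq> a\<close> by blast
    qed
  qed
  moreover have "map fst (rl a b xs) = map fst xs" by (simp add: rl_def)
  ultimately show ?thesis unfolding mkp_def merge_blocks_def by simp
qed





lemma adm_i: "admissible a \<Longrightarrow> length w \<ge> 1 \<Longrightarrow> a (one_block w) = 1"
proof -
  assume A: "admissible a" and l: "length w \<ge> 1"
  have "\<forall>w. length w \<ge> 1 \<longrightarrow> a (one_block w) = 1" using A[unfolded admissible_def] by (rule conjunct1)
  then show ?thesis using l by blast
qed
lemma adm_ii: "admissible a \<Longrightarrow> a ([x, y], {{1}, {2}}) = 1"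
proof -
  assume A: "admissible a"
  have "\<forall>x y. a ([x, y], {{1}, {2}}) = 1" using A[unfolded admissible_def] by (rule conjunct2[THEN conjunct1])
  then show ?thesis by blast
qed
lemma adm_iii: "admissible a \<Longrightarrow> x \<in> mfparts \<Longrightarrow> a x = a (reduce x)"
proof -
  assume A: "admissible a" and x: "x \<in> mfparts"
  have "\<forall>x\<in>mfparts. a x = a (reduce x)" using A[unfolded admissible_def]
    by (rule conjunct2[THEN conjunct2, THEN conjunct1])
  then show ?thesis using x by blast
qed
lemma adm_iv: "admissible a \<Longrightarrow> (w, p) \<in> mfparts \<Longrightarrow> b1 \<in> p \<Longrightarrow> b2 \<in> p \<Longrightarrow> b1 \<noteq> b2 \<Longrightarrow>
        i \<in> b1 \<Longrightarrow> i + 1 \<in> b2 \<Longrightarrow> face w i = face w (i + 1) \<Longrightarrow>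
        a (w, p) = a (w, merge_blocks p b1 b2) * a (sub_part w (b1 \<union> b2) {b1, b2})"
proof -
  assume A: "admissible a"
  have "\<forall>w p b1 b2 i. (w, p) \<in> mfparts \<longrightarrow> b1 \<in> p \<longrightarrow> b2 \<in> p \<longrightarrow> b1 \<noteq> b2 \<longrightarrow>
        i \<in> b1 \<longrightarrow> i + 1 \<in> b2 \<longrightarrow> face w i = face w (i + 1) \<longrightarrow>
        a (w, p) = a (w, merge_blocks p b1 b2) * a (sub_part w (b1 \<union> b2) {b1, b2})"
    using A[unfolded admissible_def] by (rule conjunct2[THEN conjunct2, THEN conjunct2, THEN conjunct1])
  then show "(w, p) \<in> mfparts \<Longrightarrow> b1 \<in> p \<Longrightarrow> b2 \<in> p \<Longrightarrow> b1 \<noteq> b2 \<Longrightarrow>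
        i \<in> b1 \<Longrightarrow> i + 1 \<in> b2 \<Longrightarrow> face w i = face w (i + 1) \<Longrightarrow> ?thesis" by blast
qed
lemma adm_v: "admissible a \<Longrightarrow> (w, p) \<in> mfparts \<Longrightarrow> length g = length w \<Longrightarrow>
        (\<forall>l. 1 < l \<and> l < length w \<longrightarrow> face w l = face g l) \<Longrightarrow> a (w, p) = a (g, p)"
proof -
  assume A: "admissible a"
  have "\<forall>w g p. (w, p) \<in> mfparts \<longrightarrow> length g = length w \<longrightarrow>
        (\<forall>l. 1 < l \<and> l < length w \<longrightarrow> face w l = face g l) \<longrightarrow> a (w, p) = a (g, p)"
    using A[unfolded admissible_def] by (rule conjunct2[THEN conjunct2, THEN conjunct2, THEN conjunct2, THEN conjunct1])
  then show "(w, p) \<in> mfparts \<Longrightarrow> length g = length w \<Longrightarrow>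
        (\<forall>l. 1 < l \<and> l < length w \<longrightarrow> face w l = face g l) \<Longrightarrow> ?thesis" by blast
qed

lemma mkp_relabel:
  assumes "inj_on g (snd ` set xs)"
  shows "mkp (map (\<lambda>z. (fst z, g (snd z))) xs) = mkp xs"
proof -
  have b: "blk (map (\<lambda>z. (fst z, g (snd z))) xs) (g c) = blk xs c" if "c \<in> snd ` set xs" for c
  proof -
    have "g (snd (xs!(i-1))) = g c \<longleftrightarrow> snd (xs!(i-1)) = c" if "i \<in> {1..length xs}" for i
    proof -
      have "snd (xs!(i-1)) \<in> snd ` set xs" using that by auto
      then show ?thesis using assms \<open>c \<in> snd ` set xs\<close> by (meson inj_onD)
    qed
    then show ?thesis by auto
  qed
  have "(\<lambda>d. blk (map (\<lambda>z. (fst z, g (snd z))) xs) d) ` snd ` set (map (\<lambda>z. (fst z, g (snd z))) xs)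
     = (\<lambda>c. blk (map (\<lambda>z. (fst z, g (snd z))) xs) (g c)) ` snd ` set xs"
    by (simp add: image_image)
  also have "\<dots> = (\<lambda>c. blk xs c) ` snd ` set xs" using b by (auto intro!: image_cong)
  finally show ?thesis unfolding mkp_def by (simp add: o_def)
qed

lemma adm_one:
  assumes "admissible a" "xs \<noteq> []" "\<forall>z\<in>set xs. snd z = l"
  shows "a (mkp xs) = 1"
proof -
  have L: "snd ` set xs = {l}" using assms(2,3) by (cases xs) auto
  have "snd (xs!(i-1)) = l" if "i \<in> {1..length xs}" for i
  proof -
    have "i - 1 < length xs" using that by auto
    then have "xs!(i-1) \<in> set xs" by (rule nth_mem)
    then show ?thesis using assms(3) by blast
  qed
  then have "blk xs l = {1..length xs}" by blast
  then have "mkp xs = one_block (map fst xs)" unfolding mkp_def one_block_def L by simp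
  then show ?thesis using adm_i[OF assms(1), of "map fst xs"] assms(2) by (simp add: Suc_le_eq)
qed

lemma adm_two:
  assumes "admissible a" "l1 \<noteq> l2"
  shows "a (mkp [(f,l1),(g,l2)]) = 1"
proof -
  have "blk [(f,l1),(g,l2)] l1 = {1}" "blk [(f,l1),(g,l2)] l2 = {2}" using assms(2)
    by (auto simp: le_Suc_eq numeral_2_eq_2)
  then have "mkp [(f,l1),(g,l2)] = ([f,g], {{1},{2}})" unfolding mkp_def by auto
  then show ?thesis using adm_ii[OF assms(1)] by simp
qed

lemma adm_red:
  assumes "admissible a" "xs \<noteq> []"
  shows "a (mkp xs) = a (mkp (remdups_adj xs))"
proof -
  have "a (mkp xs) = a (reduce (mkp xs))" using adm_iii[OF assms(1) mkp_mfparts[OF assms(2)]] .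
  then show ?thesis by (simp add: reduce_mkp)
qed

lemma adm_dup:
  assumes "admissible a"
  shows "a (mkp (us @ [z,z] @ vs)) = a (mkp (us @ [z] @ vs))"
proof -
  have e1: "remdups_adj (us @ z # (z # vs)) = remdups_adj (us@[z]) @ tl (remdups_adj (z#z#vs))"
    by (rule remdups_adj_append)
  have e2: "remdups_adj (us @ z # vs) = remdups_adj (us@[z]) @ tl (remdups_adj (z#vs))"
    by (rule remdups_adj_append)
  have e3: "remdups_adj (z#z#vs) = remdups_adj (z#vs)" by simp
  have "remdups_adj (us @ [z,z] @ vs) = remdups_adj (us @ [z] @ vs)"
    using e1 e2 e3 by simp
  note r = this
  have n1: "us @ [z,z] @ vs \<noteq> []" and n2: "us @ [z] @ vs \<noteq> []" by simp_all
  have "a (mkp (us @ [z,z] @ vs)) = a (mkp (remdups_adj (us @ [z,z] @ vs)))" by (rule adm_red[OF assms n1])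
  also have "\<dots> = a (mkp (remdups_adj (us @ [z] @ vs)))" by (simp only: r)
  also have "\<dots> = a (mkp (us @ [z] @ vs))" by (rule adm_red[OF assms n2, symmetric])
  finally show ?thesis .
qed

lemma adm_faces:
  assumes "admissible a" "xs \<noteq> []" "length ys = length xs" "map snd ys = map snd xs"
    "\<forall>l. 1 < l \<and> l < length xs \<longrightarrow> fst (xs!(l-1)) = fst (ys!(l-1))"
  shows "a (mkp xs) = a (mkp ys)"
proof -
  have b: "blk ys c = blk xs c" for c
  proof -
    have "snd (ys!(i-1)) = snd (xs!(i-1))" if "i \<in> {1..length xs}" for i
    proof -
      have il: "i - 1 < length xs" using that by auto
      then have "(map snd ys)!(i-1) = (map snd xs)!(i-1)" using assms(4) by simp
      then show ?thesis using il assms(3) by simp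
    qed
    then show ?thesis using assms(3) by auto
  qed
  have L: "snd ` set ys = snd ` set xs" using assms(4) by (metis set_map)
  have m: "mkp ys = (map fst ys, snd (mkp xs))" unfolding mkp_def b L by simp
  have "a (map fst xs, snd (mkp xs)) = a (map fst ys, snd (mkp xs))"
  proof -
    have "(map fst xs, snd (mkp xs)) \<in> mfparts" using mkp_mfparts[OF assms(2)] by (simp add: mkp_def)
    moreover have "\<forall>l. 1 < l \<and> l < length (map fst xs) \<longrightarrow> face (map fst xs) l = face (map fst ys) l"
      using assms(3,5) by auto
    ultimately show ?thesis using adm_v[OF assms(1)] assms(3) by simp
  qed
  then show ?thesis using m by (simp add: mkp_def)
qed

lemma adm_merge:
  assumes "admissible a" "xs = us @ [(f,l1),(f,l2)] @ vs" "l1 \<noteq> l2" "{a1,b1} = {l1,l2}"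
  shows "a (mkp xs) = a (mkp (rl a1 b1 xs)) * a (mkp (filter (\<lambda>z. snd z \<in> {l1,l2}) xs))"
proof -
  let ?w = "map fst xs" and ?p = "snd (mkp xs)"
  have l1: "l1 \<in> snd ` set xs" and l2: "l2 \<in> snd ` set xs" using assms(2) by auto
  have i1: "Suc (length us) \<in> blk xs l1" and i2: "Suc (Suc (length us)) \<in> blk xs l2"
    using assms(2) by (auto simp: nth_append)
  have ne: "blk xs l1 \<noteq> blk xs l2"
  proof
    assume "blk xs l1 = blk xs l2"
    then have "l1 = l2" by (rule blk_inj[OF l1])
    with assms(3) show False by simp
  qed
  have fa: "face ?w (Suc (length us)) = face ?w (Suc (length us) + 1)" using assms(2) by (simp add: nth_append)
  have inp: "blk xs l1 \<in> ?p" "blk xs l2 \<in> ?p" using l1 l2 by (auto simp: mkp_def)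
  have mf: "(?w, ?p) \<in> mfparts" using mkp_mfparts[of xs] assms(2) by (simp add: mkp_def)
  have "a (?w, ?p) = a (?w, merge_blocks ?p (blk xs l1) (blk xs l2)) * a (sub_part ?w (blk xs l1 \<union> blk xs l2) {blk xs l1, blk xs l2})"
    using adm_iv[OF assms(1) mf inp ne, of "Suc (length us)"] i1 i2 fa by simp
  moreover have "merge_blocks ?p (blk xs l1) (blk xs l2) = merge_blocks ?p (blk xs a1) (blk xs b1)"
    using assms(4) by (auto simp: merge_blocks_def doubleton_eq_iff)
  moreover have "(?w, merge_blocks ?p (blk xs a1) (blk xs b1)) = mkp (rl a1 b1 xs)"
  proof -
    have "a1 \<in> snd ` set xs" "b1 \<in> snd ` set xs" "a1 \<noteq> b1" using l1 l2 assms(3,4)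
      by (auto simp: doubleton_eq_iff)
    from merge_mkp[OF this] show ?thesis by simp
  qed
  moreover have "sub_part ?w (blk xs l1 \<union> blk xs l2) {blk xs l1, blk xs l2} = mkp (filter (\<lambda>z. snd z \<in> {l1,l2}) xs)"
  proof -
    have "blk xs l1 \<union> blk xs l2 = {i\<in>{1..length xs}. snd (xs!(i-1)) \<in> {l1,l2}}" by auto
    moreover have "{blk xs l1, blk xs l2} = (\<lambda>c. blk xs c) ` {l1,l2}" by auto
    ultimately show ?thesis using mkp_filter[of "{l1,l2}" xs] l1 l2 by simp
  qed
  ultimately show ?thesis by (simp add: mkp_def)
qed




lemma set123: "(i::nat) \<in> {1..3} \<longleftrightarrow> i = 1 \<or> i = 2 \<or> i = 3" by auto
lemma set1234: "(i::nat) \<in> {1..4} \<longleftrightarrow> i = 1 \<or> i = 2 \<or> i = 3 \<or> i = 4" by auto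

lemma basic_nu1:
  assumes "x \<noteq> y"
  shows "a (mkp [(q,x),(q,y),(q,x)]) = nu1 a q"
proof -
  have "blk [(q,x),(q,y),(q,x)] x = {1,3}" "blk [(q,x),(q,y),(q,x)] y = {2}"
    using assms by (auto simp: le_Suc_eq)
  then have "mkp [(q,x),(q,y),(q,x)] = ([q,q,q], {{1,3},{2}})" unfolding mkp_def by auto
  then show ?thesis by (simp add: nu1_def)
qed

lemma basic_nu2:
  assumes "x \<noteq> y"
  shows "a (mkp [(q,x),(q,y),(Q,y),(Q,x)]) = nu2 a q Q"
proof -
  have "blk [(q,x),(q,y),(Q,y),(Q,x)] x = {1,4}" "blk [(q,x),(q,y),(Q,y),(Q,x)] y = {2,3}"
    using assms by (auto simp: le_Suc_eq)
  then have "mkp [(q,x),(q,y),(Q,y),(Q,x)] = ([q,q,Q,Q], {{1,4},{2,3}})" unfolding mkp_def by auto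
  then show ?thesis by (simp add: nu2_def)
qed

lemma basic_xi2:
  assumes "x \<noteq> y"
  shows "a (mkp [(q,x),(q,y),(Q,x),(Q,y)]) = xi2 a q Q"
proof -
  have "blk [(q,x),(q,y),(Q,x),(Q,y)] x = {1,3}" "blk [(q,x),(q,y),(Q,x),(Q,y)] y = {2,4}"
    using assms by (auto simp: le_Suc_eq)
  then have "mkp [(q,x),(q,y),(Q,x),(Q,y)] = ([q,q,Q,Q], {{1,3},{2,4}})" unfolding mkp_def by auto
  then show ?thesis by (simp add: xi2_def)
qed

lemma adm_first:
  assumes "admissible a"
  shows "a (mkp ((f,l)#ys)) = a (mkp ((g,l)#ys))"
proof (rule adm_faces[OF assms])
  show "\<forall>i. 1 < i \<and> i < length ((f,l)#ys) \<longrightarrow> fst (((f,l)#ys)!(i-1)) = fst (((g,l)#ys)!(i-1))"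
  proof (intro allI impI)
    fix i assume "1 < i \<and> i < length ((f,l)#ys)"
    then obtain j where "i - 1 = Suc j" by (metis Suc_diff_Suc Suc_pred' diff_Suc_1 zero_less_diff)
    then show "fst (((f,l)#ys)!(i-1)) = fst (((g,l)#ys)!(i-1))" by simp
  qed
qed simp_all

lemma adm_last:
  assumes "admissible a"
  shows "a (mkp (ys@[(f,l)])) = a (mkp (ys@[(g,l)]))"
proof (rule adm_faces[OF assms])
  show "\<forall>i. 1 < i \<and> i < length (ys@[(f,l)]) \<longrightarrow> fst ((ys@[(f,l)])!(i-1)) = fst ((ys@[(g,l)])!(i-1))"
  proof (intro allI impI)
    fix i assume "1 < i \<and> i < length (ys@[(f,l)])"
    then have "i - 1 < length ys" by auto
    then show "fst ((ys@[(f,l)])!(i-1)) = fst ((ys@[(g,l)])!(i-1))" by (simp add: nth_append)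
  qed
qed simp_all

lemma adm_rm1:
  assumes "admissible a"
  shows "a (mkp ((f,l)#(g,l)#ys)) = a (mkp ((g,l)#ys))"
proof -
  have "a (mkp ((f,l)#(g,l)#ys)) = a (mkp ((g,l)#(g,l)#ys))" by (rule adm_first[OF assms])
  also have "\<dots> = a (mkp ([] @ [(g,l),(g,l)] @ ys))" by simp
  also have "\<dots> = a (mkp ([] @ [(g,l)] @ ys))" by (rule adm_dup[OF assms])
  finally show ?thesis by simp
qed

lemma adm_rmL:
  assumes "admissible a"
  shows "a (mkp (ys@[(f,l),(g,l)])) = a (mkp (ys@[(f,l)]))"
proof -
  have "a (mkp ((ys@[(f,l)])@[(g,l)])) = a (mkp ((ys@[(f,l)])@[(f,l)]))" by (rule adm_last[OF assms])
  also have "\<dots> = a (mkp (ys @ [(f,l),(f,l)] @ []))" by simp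
  also have "\<dots> = a (mkp (ys @ [(f,l)] @ []))" by (rule adm_dup[OF assms])
  finally show ?thesis by simp
qed

lemma adm_NI1:
  assumes "admissible a" "us \<noteq> []" "\<forall>z\<in>set us. snd z = x" "x \<noteq> c"
  shows "a (mkp (us @ [(h,c)])) = 1"
  using assms(2,3)
proof (induction us)
  case Nil then show ?case by simp
next
  case (Cons u us)
  show ?case
  proof (cases us)
    case Nil
    then show ?thesis using adm_two[OF assms(1) assms(4)] Cons.prems
      by (cases u) simp
  next
    case (Cons u2 us2)
    have "a (mkp ((u # us) @ [(h, c)])) = a (mkp ((fst u, x) # (fst u2, x) # us2 @ [(h,c)]))"
      using Cons \<open>\<forall>z\<in>set (u # us). snd z = x\<close> by (cases u, cases u2) simp
    also have "\<dots> = a (mkp ((fst u2, x) # us2 @ [(h,c)]))" by (rule adm_rm1[OF assms(1)])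
    also have "\<dots> = a (mkp (us @ [(h,c)]))"
      using Cons \<open>\<forall>z\<in>set (u # us). snd z = x\<close> by (cases u2) simp
    also have "\<dots> = 1" using Cons.IH Cons.prems \<open>us = u2 # us2\<close> by simp
    finally show ?thesis .
  qed
qed

lemma adm_NI:
  assumes "admissible a" "us \<noteq> []" "\<forall>z\<in>set us. snd z = x" "vs \<noteq> []" "\<forall>z\<in>set vs. snd z = c" "x \<noteq> c"
  shows "a (mkp (us @ vs)) = 1"
  using assms(4,5)
proof (induction vs rule: rev_induct)
  case Nil then show ?case by simp
next
  case (snoc v vs)
  show ?case
  proof (cases vs rule: rev_cases)
    case Nil
    then show ?thesis using adm_NI1[OF assms(1,2,3,6)] snoc.prems by (cases v) simp
  next
    case (snoc vs2 v2)
    have "a (mkp (us @ vs @ [v])) = a (mkp ((us @ vs2) @ [(fst v2, c), (fst v, c)]))"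
      using snoc \<open>\<forall>z\<in>set (vs @ [v]). snd z = c\<close> by (cases v, cases v2) simp
    also have "\<dots> = a (mkp ((us @ vs2) @ [(fst v2, c)]))" by (rule adm_rmL[OF assms(1)])
    also have "\<dots> = a (mkp (us @ vs))"
      using snoc \<open>\<forall>z\<in>set (vs @ [v]). snd z = c\<close> by (cases v2) simp
    also have "\<dots> = 1" using snoc.IH snoc.prems \<open>vs = vs2 @ [v2]\<close> by simp
    finally show ?thesis by simp
  qed
qed




lemma rl_app[simp]: "rl a b (xs @ ys) = rl a b xs @ rl a b ys" by (simp add: rl_def)
lemma rl_Cons[simp]: "rl a b (z # ys) = (fst z, if snd z = a then b else snd z) # rl a b ys" by (simp add: rl_def)
lemma rl_Nil[simp]: "rl a b [] = []" by (simp add: rl_def)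

lemma rl_noc: "\<forall>z\<in>set xs. snd z \<noteq> c \<Longrightarrow> rl c b xs = xs"
  by (induction xs) auto
lemma rl_back: "\<forall>z\<in>set xs. snd z \<noteq> c \<Longrightarrow> rl c x (rl x c xs) = xs"
  by (induction xs) auto
lemma rl_all: "\<forall>z\<in>set xs. snd z \<in> {x,y} \<Longrightarrow> rl c y (rl x c xs) = map (\<lambda>z. (fst z, y)) xs"
  by (induction xs) auto
lemma rl_labs: "\<forall>z\<in>set xs. snd z \<in> {x,y} \<Longrightarrow> \<forall>z\<in>set (rl x c xs). snd z \<in> {c,y}"
  by (induction xs) auto
lemma rl_len[simp]: "length (rl a b xs) = length xs" by (simp add: rl_def)

lemma T5:
  assumes adm: "admissible a" and xy: "x \<noteq> y" "c \<noteq> x" "c \<noteq> y"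
    and S: "\<forall>z\<in>set S. snd z \<in> {x,y}" "S = S0 @ [(h1,m1),(h2,m2)]" "m1 \<noteq> m2"
    and P0: "\<forall>z\<in>set P0. snd z \<noteq> c"
  defines "S' \<equiv> S0 @ [(h1,m1),(h1,m2)]"
  shows "a (mkp (P0 @ [(g,x)] @ S)) =
         a (mkp (P0 @ [(g,x),(g,y)] @ map (\<lambda>z. (fst z, y)) S')) *
         a (mkp (filter (\<lambda>z. snd z \<in> {y,c}) P0 @ [(g,c)] @ rl x c S'))"
proof -
  have S'l: "\<forall>z\<in>set S'. snd z \<in> {x,y}" using S unfolding S'_def by auto
  have S'c: "\<forall>z\<in>set S'. snd z \<noteq> c" using S'l xy by auto
  have m12: "m1 \<in> {x,y}" "m2 \<in> {x,y}" using S by auto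
  define \<sigma> where "\<sigma> = P0 @ [(g,x),(g,c)] @ rl x c S'"
  have e1: "a (mkp (P0 @ [(g,x)] @ S)) = a (mkp (P0 @ [(g,x)] @ S'))"
  proof -
    have "P0 @ [(g,x)] @ S = (P0 @ [(g,x)] @ S0 @ [(h1,m1)]) @ [(h2,m2)]" using S by simp
    moreover have "P0 @ [(g,x)] @ S' = (P0 @ [(g,x)] @ S0 @ [(h1,m1)]) @ [(h1,m2)]" unfolding S'_def by simp
    ultimately show ?thesis using adm_last[OF adm] by metis
  qed
  have m1: "a (mkp \<sigma>) = a (mkp (rl c x \<sigma>)) * a (mkp (filter (\<lambda>z. snd z \<in> {x,c}) \<sigma>))"
    by (rule adm_merge[OF adm, of \<sigma> P0 g x c "rl x c S'" c x]) (use xy in \<open>auto simp: \<sigma>_def\<close>)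
  have "rl c x \<sigma> = P0 @ [(g,x),(g,x)] @ S'"
    unfolding \<sigma>_def using rl_noc[OF P0] rl_back[OF S'c] by simp
  then have m1a: "a (mkp (rl c x \<sigma>)) = a (mkp (P0 @ [(g,x)] @ S'))" using adm_dup[OF adm] by simp
  have m1b: "a (mkp (filter (\<lambda>z. snd z \<in> {x,c}) \<sigma>)) = 1"
  proof -
    have f1: "filter (\<lambda>z. snd z \<in> {x,c}) P0 = filter (\<lambda>z. snd z = x) P0"
      using P0 by (auto intro: filter_cong)
    have f2: "\<forall>z\<in>set (filter (\<lambda>z. snd z \<in> {x,c}) (rl x c S')). snd z = c"
      using rl_labs[OF S'l, of c] xy by auto
    have "filter (\<lambda>z. snd z \<in> {x,c}) \<sigma> = (filter (\<lambda>z. snd z = x) P0 @ [(g,x)]) @ ((g,c) # filter (\<lambda>z. snd z \<in> {x,c}) (rl x c S'))"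
      unfolding \<sigma>_def using f1 xy by simp
    moreover have "a (mkp ((filter (\<lambda>z. snd z = x) P0 @ [(g,x)]) @ ((g,c) # filter (\<lambda>z. snd z \<in> {x,c}) (rl x c S')))) = 1"
      by (rule adm_NI[OF adm, where x=x and c=c]) (use f2 xy in auto)
    ultimately show ?thesis by simp
  qed
  obtain m1' m2' where mm: "m1' = (if m1 = x then c else m1)" "m2' = (if m2 = x then c else m2)" by blast
  have mmd: "m1' \<noteq> m2'" "{c,y} = {m1',m2'}" using mm m12 S(3) xy by auto
  have \<sigma>2: "\<sigma> = (P0 @ [(g,x),(g,c)] @ rl x c S0) @ [(h1,m1'),(h1,m2')] @ []"
    unfolding \<sigma>_def S'_def using mm by simp
  have m2: "a (mkp \<sigma>) = a (mkp (rl c y \<sigma>)) * a (mkp (filter (\<lambda>z. snd z \<in> {m1',m2'}) \<sigma>))"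
    by (rule adm_merge[OF adm \<sigma>2 mmd(1) mmd(2)])
  have "rl c y \<sigma> = P0 @ [(g,x),(g,y)] @ map (\<lambda>z. (fst z, y)) S'"
    unfolding \<sigma>_def using rl_noc[OF P0] rl_all[OF S'l] xy by simp
  moreover have "filter (\<lambda>z. snd z \<in> {m1',m2'}) \<sigma> = filter (\<lambda>z. snd z \<in> {y,c}) P0 @ [(g,c)] @ rl x c S'"
  proof -
    have "filter (\<lambda>z. snd z \<in> {c,y}) (rl x c S') = rl x c S'"
      using rl_labs[OF S'l, of c] by (auto intro: filter_True)
    moreover have "filter (\<lambda>z. snd z \<in> {c,y}) P0 = filter (\<lambda>z. snd z \<in> {y,c}) P0"
      by (simp add: insert_commute)
    ultimately show ?thesis unfolding \<sigma>_def mmd(2)[symmetric] using xy by simp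
  qed
  ultimately show ?thesis using e1 m1 m1a m1b m2 by simp
qed


lemma rl_const: "\<forall>z\<in>set xs. snd z = a \<Longrightarrow> rl a b xs = map (\<lambda>z. (fst z, b)) xs"
  by (induction xs) auto
lemma filter_none: "\<forall>z\<in>set xs. \<not> P z \<Longrightarrow> filter P xs = []" by (induction xs) auto
lemma filter_all: "\<forall>z\<in>set xs. P z \<Longrightarrow> filter P xs = xs" by (induction xs) auto

lemma T3:
  assumes adm: "admissible a" and xy: "x \<noteq> y" "c \<noteq> x" "c \<noteq> y"
    and Y1: "Y1 = (q,y) # Y1t" "Y1 = Y1a @ [(g,y)]" "\<forall>z\<in>set Y1. snd z = y"
    and Y2: "Y2 \<noteq> []" "\<forall>z\<in>set Y2. snd z = y"
  shows "a (mkp ((f1,x) # Y1 @ Y2 @ [(fn,x)])) =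
         a (mkp ((q,x) # map (\<lambda>z. (fst z, x)) Y1 @ [(g,c)] @ rl y c Y2 @ [(fn,x)])) *
         a (mkp ((q,x) # Y1 @ [(fn,x)]))"
proof -
  have Y2c: "\<forall>z\<in>set (rl y c Y2). snd z = c" using Y2(2) by (induction Y2) auto
  have Y1nc: "\<forall>z\<in>set Y1. snd z \<noteq> c" using Y1(3) xy by auto
  have Y2nc: "\<forall>z\<in>set Y2. snd z \<noteq> c" using Y2(2) xy by auto
  have e0: "a (mkp ((f1,x) # Y1 @ Y2 @ [(fn,x)])) = a (mkp ((q,x) # Y1 @ Y2 @ [(fn,x)]))"
    by (rule adm_first[OF adm])
  define \<sigma> where "\<sigma> = (q,x) # Y1 @ [(g,c)] @ rl y c Y2 @ [(fn,x)]"
  have s1: "\<sigma> = ((q,x) # Y1a) @ [(g,y),(g,c)] @ (rl y c Y2 @ [(fn,x)])" unfolding \<sigma>_def using Y1 by simp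
  have m1: "a (mkp \<sigma>) = a (mkp (rl c y \<sigma>)) * a (mkp (filter (\<lambda>z. snd z \<in> {y,c}) \<sigma>))"
    by (rule adm_merge[OF adm s1]) (use xy in auto)
  have "rl c y \<sigma> = ((q,x) # Y1a) @ [(g,y),(g,y)] @ (Y2 @ [(fn,x)])"
  proof -
    have "\<forall>z\<in>set Y1a. snd z \<noteq> c" using Y1nc Y1(2) by auto
    then show ?thesis unfolding s1 using rl_noc[of Y1a c y] rl_back[OF Y2nc] xy by auto
  qed
  then have m1a: "a (mkp (rl c y \<sigma>)) = a (mkp ((q,x) # Y1 @ Y2 @ [(fn,x)]))"
    using adm_dup[OF adm, of "(q,x) # Y1a" "(g,y)" "Y2 @ [(fn,x)]"] Y1(2) by simp
  have "filter (\<lambda>z. snd z \<in> {y,c}) \<sigma> = Y1 @ ((g,c) # rl y c Y2)"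
    unfolding \<sigma>_def using Y1(3) Y2c xy by (simp add: filter_all)
  moreover have "a (mkp (Y1 @ ((g,c) # rl y c Y2))) = 1"
    by (rule adm_NI[OF adm, where x=y and c=c]) (use Y1 Y2c xy in auto)
  ultimately have m1b: "a (mkp (filter (\<lambda>z. snd z \<in> {y,c}) \<sigma>)) = 1" by simp
  have s2: "\<sigma> = [] @ [(q,x),(q,y)] @ (Y1t @ [(g,c)] @ rl y c Y2 @ [(fn,x)])" unfolding \<sigma>_def using Y1 by simp
  have m2: "a (mkp \<sigma>) = a (mkp (rl y x \<sigma>)) * a (mkp (filter (\<lambda>z. snd z \<in> {x,y}) \<sigma>))"
    by (rule adm_merge[OF adm s2]) (use xy in auto)
  have Y2cy: "\<forall>z\<in>set (rl y c Y2). snd z \<noteq> y" using Y2c xy by auto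
  have "rl y x \<sigma> = (q,x) # map (\<lambda>z. (fst z, x)) Y1 @ [(g,c)] @ rl y c Y2 @ [(fn,x)]"
    unfolding \<sigma>_def using rl_const[OF Y1(3)] rl_noc[OF Y2cy] xy by simp
  moreover have "filter (\<lambda>z. snd z \<in> {x,y}) \<sigma> = (q,x) # Y1 @ [(fn,x)]"
    unfolding \<sigma>_def using Y1(3) Y2c xy by (simp add: filter_all filter_none)
  ultimately show ?thesis using e0 m1 m1a m1b m2 by simp
qed

lemma T4a:
  assumes adm: "admissible a" and xy: "x \<noteq> y" "c \<noteq> x" "c \<noteq> y"
    and Ys: "Ys = (q,y) # Yt" "Ys = Ya @ [(g,y)]" "\<forall>z\<in>set Ys. snd z = y"
    and Xs: "\<forall>z\<in>set Xs. snd z = x"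
  shows "a (mkp ((f1,x) # Ys @ Xs @ [(fn,y)])) =
         a (mkp ((q,x) # map (\<lambda>z. (fst z, x)) Ys @ [(g,c)] @ Xs @ [(fn,c)])) *
         a (mkp ((q,x) # Ys @ Xs))"
proof -
  have Xnc: "\<forall>z\<in>set Xs. snd z \<noteq> c" "\<forall>z\<in>set Xs. snd z \<noteq> y" using Xs xy by auto
  have e0: "a (mkp ((f1,x) # Ys @ Xs @ [(fn,y)])) = a (mkp ((q,x) # Ys @ Xs @ [(fn,y)]))"
    by (rule adm_first[OF adm])
  define \<sigma> where "\<sigma> = (q,x) # Ys @ [(g,c)] @ Xs @ [(fn,c)]"
  have s1: "\<sigma> = ((q,x) # Ya) @ [(g,y),(g,c)] @ (Xs @ [(fn,c)])" unfolding \<sigma>_def using Ys by simp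
  have m1: "a (mkp \<sigma>) = a (mkp (rl c y \<sigma>)) * a (mkp (filter (\<lambda>z. snd z \<in> {y,c}) \<sigma>))"
    by (rule adm_merge[OF adm s1]) (use xy in auto)
  have "rl c y \<sigma> = ((q,x) # Ya) @ [(g,y),(g,y)] @ (Xs @ [(fn,y)])"
  proof -
    have "\<forall>z\<in>set Ya. snd z \<noteq> c" using Ys(2,3) xy by auto
    then show ?thesis unfolding s1 using rl_noc[of Ya c y] rl_noc[OF Xnc(1)] xy by auto
  qed
  then have m1a: "a (mkp (rl c y \<sigma>)) = a (mkp ((q,x) # Ys @ Xs @ [(fn,y)]))"
    using adm_dup[OF adm, of "(q,x) # Ya" "(g,y)" "Xs @ [(fn,y)]"] Ys(2) by simp
  have "filter (\<lambda>z. snd z \<in> {y,c}) \<sigma> = Ys @ [(g,c),(fn,c)]"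
    unfolding \<sigma>_def using Ys(3) Xnc xy by (simp add: filter_all filter_none)
  moreover have "a (mkp (Ys @ [(g,c),(fn,c)])) = 1"
    by (rule adm_NI[OF adm, where x=y and c=c]) (use Ys xy in auto)
  ultimately have m1b: "a (mkp (filter (\<lambda>z. snd z \<in> {y,c}) \<sigma>)) = 1" by simp
  have s2: "\<sigma> = [] @ [(q,x),(q,y)] @ (Yt @ [(g,c)] @ Xs @ [(fn,c)])" unfolding \<sigma>_def using Ys by simp
  have m2: "a (mkp \<sigma>) = a (mkp (rl y x \<sigma>)) * a (mkp (filter (\<lambda>z. snd z \<in> {x,y}) \<sigma>))"
    by (rule adm_merge[OF adm s2]) (use xy in auto)
  have "rl y x \<sigma> = (q,x) # map (\<lambda>z. (fst z, x)) Ys @ [(g,c)] @ Xs @ [(fn,c)]"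
    unfolding \<sigma>_def using rl_const[OF Ys(3)] rl_noc[OF Xnc(2)] xy by simp
  moreover have "filter (\<lambda>z. snd z \<in> {x,y}) \<sigma> = (q,x) # Ys @ Xs"
    unfolding \<sigma>_def using Ys(3) Xs xy by (simp add: filter_all)
  ultimately show ?thesis using e0 m1 m1a m1b m2 by simp
qed

lemma T4b:
  assumes adm: "admissible a" and xy: "x \<noteq> y" "c \<noteq> x" "c \<noteq> y"
    and Xs: "Xs = (h,x) # Xt" "Xs = Xa @ [(e,x)]" "\<forall>z\<in>set Xs. snd z = x"
  shows "a (mkp ((f1,x) # (q,y) # Xs @ [(fn,y)])) =
         a (mkp ((f1,c) # (q,x) # (h,c) # Xs @ [(e,x)])) *
         a (mkp ((q,y) # Xs @ [(e,y)]))"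
proof -
  have Xnc: "\<forall>z\<in>set Xs. snd z \<noteq> c" "\<forall>z\<in>set Xs. snd z \<noteq> y" using Xs xy by auto
  have e0: "a (mkp (((f1,x) # (q,y) # Xs) @ [(fn,y)])) = a (mkp (((f1,x) # (q,y) # Xs) @ [(e,y)]))"
    by (rule adm_last[OF adm])
  define \<sigma> where "\<sigma> = (f1,c) # (q,y) # (h,c) # Xs @ [(e,y)]"
  have s1: "\<sigma> = [(f1,c),(q,y)] @ [(h,c),(h,x)] @ (Xt @ [(e,y)])" unfolding \<sigma>_def using Xs by simp
  have m1: "a (mkp \<sigma>) = a (mkp (rl c x \<sigma>)) * a (mkp (filter (\<lambda>z. snd z \<in> {c,x}) \<sigma>))"
    by (rule adm_merge[OF adm s1]) (use xy in auto)
  have "rl c x \<sigma> = [(f1,x),(q,y)] @ [(h,x),(h,x)] @ (Xt @ [(e,y)])"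
    unfolding \<sigma>_def using rl_noc[OF Xnc(1)] Xs xy by auto
  then have m1a: "a (mkp (rl c x \<sigma>)) = a (mkp ((f1,x) # (q,y) # Xs @ [(e,y)]))"
    using adm_dup[OF adm, of "[(f1,x),(q,y)]" "(h,x)" "Xt @ [(e,y)]"] Xs(1) by simp
  have "filter (\<lambda>z. snd z \<in> {c,x}) \<sigma> = [(f1,c),(h,c)] @ Xs"
    unfolding \<sigma>_def using Xs(3) xy by (simp add: filter_all)
  moreover have "a (mkp ([(f1,c),(h,c)] @ Xs)) = 1"
    by (rule adm_NI[OF adm, where x=c and c=x]) (use Xs xy in auto)
  ultimately have m1b: "a (mkp (filter (\<lambda>z. snd z \<in> {c,x}) \<sigma>)) = 1" by simp
  have s2: "\<sigma> = ((f1,c) # (q,y) # (h,c) # Xa) @ [(e,x),(e,y)] @ []" unfolding \<sigma>_def using Xs by simp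
  have m2: "a (mkp \<sigma>) = a (mkp (rl y x \<sigma>)) * a (mkp (filter (\<lambda>z. snd z \<in> {x,y}) \<sigma>))"
    by (rule adm_merge[OF adm s2]) (use xy in auto)
  have "rl y x \<sigma> = (f1,c) # (q,x) # (h,c) # Xs @ [(e,x)]"
    unfolding \<sigma>_def using rl_noc[OF Xnc(2)] xy by simp
  moreover have "filter (\<lambda>z. snd z \<in> {x,y}) \<sigma> = (q,y) # Xs @ [(e,y)]"
    unfolding \<sigma>_def using Xs(3) xy by (simp add: filter_all)
  ultimately show ?thesis using e0 m1 m1a m1b m2 by simp
qed




definition nlab :: "('f \<times> 'l) list \<Rightarrow> nat" where "nlab xs = card (snd ` set xs)"
definition runs :: "('f \<times> 'l) list \<Rightarrow> nat" where "runs xs = length (remdups_adj (map snd xs))"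
definition mu :: "('f \<times> 'l) list \<Rightarrow> nat" where
  "mu xs = length xs - length (takeWhile (\<lambda>z. snd z = snd (hd xs)) xs)
                     - length (takeWhile (\<lambda>z. snd z = snd (last xs)) (rev xs))"

lemma remdups_adj_map_inj_on:
  "inj_on f (set xs) \<Longrightarrow> remdups_adj (map f xs) = map f (remdups_adj xs)"
proof (induction xs rule: remdups_adj.induct)
  case (3 x y xs)
  then have "f x = f y \<longleftrightarrow> x = y" by (auto dest: inj_onD)
  then show ?case using 3 by (auto simp: inj_on_insert)
qed simp_all

lemma runs_const: "xs \<noteq> [] \<Longrightarrow> \<forall>z\<in>set xs. snd z = l \<Longrightarrow> runs xs = 1"
proof -
  assume "xs \<noteq> []" "\<forall>z\<in>set xs. snd z = l"
  then have "map snd xs = replicate (length xs) l" by (simp add: map_replicate_const[symmetric] map_eq_conv)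
  then show "runs xs = 1" using \<open>xs \<noteq> []\<close> by (simp add: runs_def remdups_adj_replicate)
qed

lemma runs_app: "us \<noteq> [] \<Longrightarrow> vs \<noteq> [] \<Longrightarrow> snd (last us) \<noteq> snd (hd vs) \<Longrightarrow> runs (us @ vs) = runs us + runs vs"
  unfolding runs_def by (simp add: remdups_adj_append' last_map hd_map)

lemma runs_rl: "\<forall>z\<in>set xs. snd z \<noteq> b \<Longrightarrow> runs (rl a b xs) = runs xs"
proof -
  assume h: "\<forall>z\<in>set xs. snd z \<noteq> b"
  let ?f = "\<lambda>l. if l = a then b else l"
  have m: "map snd (rl a b xs) = map ?f (map snd xs)" by (simp add: rl_def)
  have i: "inj_on ?f (set (map snd xs))" using h by (auto simp: inj_on_def)
  show ?thesis unfolding runs_def m remdups_adj_map_inj_on[OF i] length_map ..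
qed

lemma runs_snd: "map snd xs = map snd ys \<Longrightarrow> runs xs = runs ys" by (simp add: runs_def)

lemma mu_split:
  assumes "us \<noteq> []" "\<forall>z\<in>set us. snd z = lu" "vs \<noteq> []" "\<forall>z\<in>set vs. snd z = lv"
    "mid \<noteq> []" "snd (hd mid) \<noteq> lu" "snd (last mid) \<noteq> lv"
  shows "mu (us @ mid @ vs) = length mid"
proof -
  have h: "snd (hd (us @ mid @ vs)) = lu" using assms(1,2) by (cases us) auto
  have l: "snd (last (us @ mid @ vs)) = lv" using assms(3,4) by simp
  have t1: "takeWhile (\<lambda>z. snd z = lu) (us @ mid @ vs) = us"
  proof -
    have "takeWhile (\<lambda>z. snd z = lu) (mid @ vs) = []" using assms(5,6) by (cases mid) auto
    then show ?thesis using assms(2) by simp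
  qed
  have t2: "takeWhile (\<lambda>z. snd z = lv) (rev (us @ mid @ vs)) = rev vs"
  proof -
    have "takeWhile (\<lambda>z. snd z = lv) (rev mid @ rev us) = []" using assms(5,7)
      by (cases mid rule: rev_cases) auto
    moreover have "takeWhile (\<lambda>z. snd z = lv) (rev vs @ (rev mid @ rev us)) = rev vs @ takeWhile (\<lambda>z. snd z = lv) (rev mid @ rev us)"
      by (rule takeWhile_append2) (use assms(4) in auto)
    ultimately show ?thesis by simp
  qed
  show ?thesis unfolding mu_def h l t1 t2 by simp
qed

lemma nlab_le2: "\<forall>z\<in>set xs. snd z \<in> {u,v} \<Longrightarrow> nlab xs \<le> 2"
proof -
  assume "\<forall>z\<in>set xs. snd z \<in> {u,v}"
  then have sub: "snd ` set xs \<subseteq> {u,v}" by auto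
  have "card (snd ` set xs) \<le> card {u,v}" by (rule card_mono[OF _ sub]) simp
  also have "\<dots> \<le> 2" by (simp add: card_insert_le_m1)
  finally show ?thesis by (simp add: nlab_def)
qed

lemma not_all_same:
  assumes "nlab xs \<ge> 2"
  shows "\<exists>z\<in>set xs. snd z \<noteq> l"
proof (rule ccontr)
  assume "\<not> ?thesis"
  then have "snd ` set xs \<subseteq> {l}" by auto
  then have "card (snd ` set xs) \<le> card {l}" by (rule card_mono[rotated]) simp
  then have "card (snd ` set xs) \<le> 1" by simp
  then show False using assms by (simp add: nlab_def)
qed

lemma rm1_meas:
  assumes "snd z1 = snd z2" "nlab (z1#z2#ys) \<ge> 2"
  shows "nlab (z2#ys) = nlab (z1#z2#ys)" "runs (z2#ys) = runs (z1#z2#ys)" "mu (z2#ys) = mu (z1#z2#ys)"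
    "length (z2#ys) < length (z1#z2#ys)"
proof -
  have L: "snd ` set (z1#z2#ys) = snd ` set (z2#ys)" using assms(1) by auto
  show "nlab (z2#ys) = nlab (z1#z2#ys)" unfolding nlab_def L ..
  show "runs (z2#ys) = runs (z1#z2#ys)" unfolding runs_def using assms(1) by simp
  show "length (z2#ys) < length (z1#z2#ys)" by simp
  have n2: "nlab (z2#ys) \<ge> 2" using assms(2) unfolding nlab_def L .
  obtain u where u: "u \<in> set (z2#ys)" "snd u \<noteq> snd (last (z2#ys))" using not_all_same[OF n2] by blast
  have t1: "takeWhile (\<lambda>z. snd z = snd (hd (z1#z2#ys))) (z1#z2#ys) = z1 # takeWhile (\<lambda>z. snd z = snd (hd (z2#ys))) (z2#ys)"
    using assms(1) by simp
  have t2: "takeWhile (\<lambda>z. snd z = snd (last (z1#z2#ys))) (rev (z1#z2#ys)) = takeWhile (\<lambda>z. snd z = snd (last (z2#ys))) (rev (z2#ys))"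
  proof -
    have e1: "rev (z1#z2#ys) = rev (z2#ys) @ [z1]" by simp
    have e2: "last (z1#z2#ys) = last (z2#ys)" by simp
    have ur: "u \<in> set (rev (z2#ys))" using u by simp
    show ?thesis unfolding e1 e2 by (rule takeWhile_append1[OF ur]) (use u(2) in simp)
  qed
  show "mu (z2#ys) = mu (z1#z2#ys)" unfolding mu_def t1 t2 by simp
qed

lemma rmL_meas:
  assumes "snd w1 = snd w2" "nlab (zs@[w1,w2]) \<ge> 2"
  shows "nlab (zs@[w1]) = nlab (zs@[w1,w2])" "runs (zs@[w1]) = runs (zs@[w1,w2])" "mu (zs@[w1]) = mu (zs@[w1,w2])"
    "length (zs@[w1]) < length (zs@[w1,w2])"
proof -
  have L: "snd ` set (zs@[w1,w2]) = snd ` set (zs@[w1])" using assms(1) by auto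
  show "nlab (zs@[w1]) = nlab (zs@[w1,w2])" unfolding nlab_def L ..
  show "runs (zs@[w1]) = runs (zs@[w1,w2])" unfolding runs_def using assms(1)
    by (simp add: remdups_adj_append_two)
  show "length (zs@[w1]) < length (zs@[w1,w2])" by simp
  have n2: "nlab (zs@[w1]) \<ge> 2" using assms(2) unfolding nlab_def L .
  obtain u where u: "u \<in> set (zs@[w1])" "snd u \<noteq> snd (hd (zs@[w1]))" using not_all_same[OF n2] by blast
  have t1: "takeWhile (\<lambda>z. snd z = snd (hd (zs@[w1,w2]))) (zs@[w1,w2]) = takeWhile (\<lambda>z. snd z = snd (hd (zs@[w1]))) (zs@[w1])"
  proof -
    have e1: "zs@[w1,w2] = (zs@[w1]) @ [w2]" by simp
    have e2: "hd (zs@[w1,w2]) = hd (zs@[w1])" by (cases zs) auto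
    show ?thesis unfolding e2 unfolding e1 by (rule takeWhile_append1[OF u(1)]) (use u(2) in simp)
  qed
  have t2: "takeWhile (\<lambda>z. snd z = snd (last (zs@[w1,w2]))) (rev (zs@[w1,w2])) = w2 # takeWhile (\<lambda>z. snd z = snd (last (zs@[w1]))) (rev (zs@[w1]))"
    using assms(1) by simp
  show "mu (zs@[w1]) = mu (zs@[w1,w2])" unfolding mu_def t1 t2 by simp
qed




abbreviation "M \<equiv> [nlab, runs, mu, length]"

lemma lex1: "nlab y < nlab x \<Longrightarrow> (y, x) \<in> measures M" by (rule measures_less)
lemma lex2: "nlab y \<le> nlab x \<Longrightarrow> runs y < runs x \<Longrightarrow> (y, x) \<in> measures M"
  by (rule measures_lesseq, assumption, rule measures_less)
lemma lex3: "nlab y \<le> nlab x \<Longrightarrow> runs y \<le> runs x \<Longrightarrow> mu y < mu x \<Longrightarrow> (y, x) \<in> measures M"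
  by (rule measures_lesseq, assumption, rule measures_lesseq, assumption, rule measures_less)
lemma lex4: "nlab y \<le> nlab x \<Longrightarrow> runs y \<le> runs x \<Longrightarrow> mu y \<le> mu x \<Longrightarrow> length y < length x \<Longrightarrow> (y, x) \<in> measures M"
  by (rule measures_lesseq, assumption, rule measures_lesseq, assumption, rule measures_lesseq, assumption, rule measures_less)

lemma runs1: "runs [z] = 1" by (simp add: runs_def)

lemma caseT5:
  fixes xs :: "('f::finite \<times> nat) list"
  assumes A: "admissible a" and B: "admissible b"
    and H: "\<And>ys. (ys, xs) \<in> measures M \<Longrightarrow> ys \<noteq> [] \<Longrightarrow> a (mkp ys) = b (mkp ys)"
    and xs: "xs = (f1,x) # Ys @ Xs @ S" and xy: "x \<noteq> y" and n2: "nlab xs = 2"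
    and Ys: "Ys \<noteq> []" "\<forall>z\<in>set Ys. snd z = y"
    and Xs: "Xs \<noteq> []" "\<forall>z\<in>set Xs. snd z = x"
    and S: "S = Zs @ R4" "Zs \<noteq> []" "\<forall>z\<in>set Zs. snd z = y" "R4 \<noteq> []" "snd (hd R4) = x"
      "\<forall>z\<in>set S. snd z \<in> {x,y}" "S = S0 @ [(h1,m1),(h2,m2)]" "m1 \<noteq> m2"
  shows "a (mkp xs) = b (mkp xs)"
proof -
  define c where "c = Suc (x + y)"
  have cxy: "c \<noteq> x" "c \<noteq> y" unfolding c_def by auto
  define P0 where "P0 = (f1,x) # Ys @ butlast Xs"
  define g where "g = fst (last Xs)"
  have "snd (last Xs) = x" using Xs by simp
  then have lX: "last Xs = (g, x)" unfolding g_def by (simp add: prod_eq_iff)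
  have bX: "butlast Xs @ [(g,x)] = Xs" using append_butlast_last_id[OF Xs(1)] lX by simp
  have PX: "P0 @ [(g,x)] = (f1,x) # Ys @ Xs" unfolding P0_def using bX by simp
  have "P0 @ [(g,x)] @ S = (P0 @ [(g,x)]) @ S" by simp
  also have "\<dots> = ((f1,x) # Ys @ Xs) @ S" by (simp only: PX)
  finally have xs2: "xs = P0 @ [(g,x)] @ S" using xs by simp
  have P0c: "\<forall>z\<in>set P0. snd z \<noteq> c" unfolding P0_def using Ys Xs cxy
    by (auto dest: in_set_butlastD)
  define S' where "S' = S0 @ [(h1,m1),(h1,m2)]"
  define p1 where "p1 = P0 @ [(g,x),(g,y)] @ map (\<lambda>z. (fst z, y)) S'"
  define p2 where "p2 = filter (\<lambda>z. snd z \<in> {y,c}) P0 @ [(g,c)] @ rl x c S'"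
  have ea: "a (mkp xs) = a (mkp p1) * a (mkp p2)"
    unfolding xs2 p1_def p2_def S'_def by (rule T5[OF A xy cxy S(6) S(7) S(8) P0c])
  have eb: "b (mkp xs) = b (mkp p1) * b (mkp p2)"
    unfolding xs2 p1_def p2_def S'_def by (rule T5[OF B xy cxy S(6) S(7) S(8) P0c])
  have sS': "map snd S' = map snd S" unfolding S'_def using S(7) by simp
  have S'l: "\<forall>z\<in>set S'. snd z \<in> {x,y}" using S(6,7) unfolding S'_def by auto
  have S'ne: "S' \<noteq> []" unfolding S'_def by simp
  have hS': "snd (hd S') = y"
  proof -
    have "snd (hd S') = hd (map snd S')" using S'ne by (simp add: hd_map)
    also have "\<dots> = hd (map snd S)" by (simp only: sS')
    also have "\<dots> = snd (hd Zs)" using S(1,2) by (simp add: hd_map)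
    also have "\<dots> = y" using S(2,3) by simp
    finally show ?thesis .
  qed
  have rS: "runs S \<ge> 2"
  proof -
    have "snd (last Zs) \<noteq> snd (hd R4)" using S(2,3,5) xy by simp
    then have "runs S = runs Zs + runs R4" using S(1,2,4) runs_app by simp
    moreover have "runs Zs \<ge> 1" "runs R4 \<ge> 1" using S(2,4) by (simp_all add: runs_def)
    ultimately show ?thesis by simp
  qed
  have rxs: "runs xs = 3 + runs S"
  proof -
    have "runs ((Ys @ Xs) @ S) = runs (Ys @ Xs) + runs S"
      by (rule runs_app) (use Ys Xs S(1,2,3) xy in auto)
    moreover have "runs (Ys @ Xs) = runs Ys + runs Xs"
      by (rule runs_app) (use Ys Xs xy in \<open>auto simp: hd_in_set\<close>)
    moreover have "runs ([(f1,x)] @ ((Ys @ Xs) @ S)) = runs [(f1,x)] + runs ((Ys @ Xs) @ S)"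
      by (rule runs_app) (use Ys xy in \<open>auto simp: hd_in_set\<close>)
    ultimately show ?thesis unfolding xs using runs_const[OF Ys] runs_const[OF Xs] by (simp add: runs1)
  qed
  have ne1: "p1 \<noteq> []" and ne2: "p2 \<noteq> []" unfolding p1_def p2_def by simp_all
  have l1: "(p1, xs) \<in> measures M"
  proof (rule lex2)
    show "nlab p1 \<le> nlab xs" unfolding n2 p1_def P0_def
      by (rule nlab_le2[of _ x y]) (use Ys Xs in \<open>auto dest: in_set_butlastD\<close>)
    have "p1 = (P0 @ [(g,x)]) @ ((g,y) # map (\<lambda>z. (fst z, y)) S')" unfolding p1_def by simp
    also have "\<dots> = ((f1,x) # Ys @ Xs) @ ((g,y) # map (\<lambda>z. (fst z, y)) S')" by (simp only: PX)
    finally have "p1 = [(f1,x)] @ Ys @ Xs @ ((g,y) # map (\<lambda>z. (fst z, y)) S')" by simp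
    moreover have "runs ([(f1,x)] @ Ys @ Xs @ ((g,y) # map (\<lambda>z. (fst z, y)) S')) = 4"
    proof -
      have r4: "runs ((g,y) # map (\<lambda>z. (fst z, y)) S') = 1" by (rule runs_const) auto
      have "runs (Xs @ ((g,y) # map (\<lambda>z. (fst z, y)) S')) = runs Xs + 1"
        using runs_app[of Xs "(g,y) # map (\<lambda>z. (fst z, y)) S'"] Xs xy r4 by simp
      moreover have "runs (Ys @ Xs @ ((g,y) # map (\<lambda>z. (fst z, y)) S')) = runs Ys + runs (Xs @ ((g,y) # map (\<lambda>z. (fst z, y)) S'))"
        by (rule runs_app) (use Ys Xs xy in \<open>auto simp: hd_in_set\<close>)
      moreover have "runs ([(f1,x)] @ Ys @ Xs @ ((g,y) # map (\<lambda>z. (fst z, y)) S')) = 1 + runs (Ys @ Xs @ ((g,y) # map (\<lambda>z. (fst z, y)) S'))"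
        using runs_app[of "[(f1,x)]" "Ys @ Xs @ ((g,y) # map (\<lambda>z. (fst z, y)) S')"] Ys xy
        by (simp add: runs1 hd_in_set)
      ultimately show ?thesis using runs_const[OF Ys] runs_const[OF Xs] by simp
    qed
    ultimately show "runs p1 < runs xs" using rxs rS by simp
  qed
  have l2: "(p2, xs) \<in> measures M"
  proof (rule lex2)
    have fP: "filter (\<lambda>z. snd z \<in> {y,c}) P0 = Ys"
    proof -
      have "\<forall>z\<in>set (butlast Xs). snd z = x" using Xs(2) by (auto dest: in_set_butlastD)
      then have "filter (\<lambda>z. snd z \<in> {y,c}) (butlast Xs) = []" using xy cxy by (intro filter_none) auto
      then show ?thesis unfolding P0_def using Ys xy cxy by (simp add: filter_all)
    qed
    show "nlab p2 \<le> nlab xs" unfolding n2 p2_def fP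
      by (rule nlab_le2[of _ y c]) (use Ys rl_labs[OF S'l, of c] in auto)
    have rT: "runs (rl x c S') = runs S"
    proof -
      have "\<forall>z\<in>set S'. snd z \<noteq> c" using S'l cxy by auto
      then have "runs (rl x c S') = runs S'" by (rule runs_rl)
      also have "\<dots> = runs S" by (rule runs_snd[OF sS'])
      finally show ?thesis .
    qed
    have hT: "snd (hd (rl x c S')) = y" using hS' S'ne xy by (cases S') auto
    have "runs ([(g,c)] @ rl x c S') = 1 + runs S"
    proof -
      have "rl x c S' \<noteq> []" using S'ne by (cases S') auto
      then show ?thesis using runs_app[of "[(g,c)]" "rl x c S'"] hT cxy rT by (simp add: runs1)
    qed
    moreover have "runs (Ys @ ([(g,c)] @ rl x c S')) = runs Ys + runs ([(g,c)] @ rl x c S')"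
      by (rule runs_app) (use Ys cxy in auto)
    ultimately have "runs p2 = 2 + runs S" unfolding p2_def fP using runs_const[OF Ys] by simp
    then show "runs p2 < runs xs" using rxs by simp
  qed
  show ?thesis using ea eb H[OF l1 ne1] H[OF l2 ne2] by simp
qed


lemma runs_blk: "us \<noteq> [] \<Longrightarrow> \<forall>z\<in>set us. snd z = l \<Longrightarrow> vs \<noteq> [] \<Longrightarrow> snd (hd vs) \<noteq> l \<Longrightarrow> runs (us @ vs) = 1 + runs vs"
  using runs_app[of us vs] runs_const[of us l] by simp

lemma caseT3:
  fixes xs :: "('f::finite \<times> nat) list"
  assumes A: "admissible a" and B: "admissible b"
    and H: "\<And>ys. (ys, xs) \<in> measures M \<Longrightarrow> ys \<noteq> [] \<Longrightarrow> a (mkp ys) = b (mkp ys)"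
    and xs: "xs = (f1,x) # Ys @ [(fn,x)]" and xy: "x \<noteq> y" and n2: "nlab xs = 2"
    and Ys: "Ys = u0 # u1 # Y2" "Y2 \<noteq> []" "\<forall>z\<in>set Ys. snd z = y"
  shows "a (mkp xs) = b (mkp xs)"
proof -
  define c where "c = Suc (x + y)"
  have cxy: "c \<noteq> x" "c \<noteq> y" unfolding c_def by auto
  define q where "q = fst u0"
  define g where "g = fst u1"
  have Ys2: "Ys = [(q,y),(g,y)] @ Y2" using Ys unfolding q_def g_def by (auto simp: prod_eq_iff)
  have Y2y: "\<forall>z\<in>set Y2. snd z = y" using Ys by auto
  define p1 where "p1 = (q,x) # map (\<lambda>z. (fst z, x)) [(q,y),(g,y)] @ [(g,c)] @ rl y c Y2 @ [(fn,x)]"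
  define p2 where "p2 = (q,x) # [(q,y),(g,y)] @ [(fn,x)]"
  have ea: "a (mkp xs) = a (mkp p1) * a (mkp p2)" unfolding xs Ys2 append.assoc p1_def p2_def
    by (rule T3[OF A xy cxy, where Y1t="[(g,y)]" and Y1a="[(q,y)]"]) (use Y2y Ys in auto)
  have eb: "b (mkp xs) = b (mkp p1) * b (mkp p2)" unfolding xs Ys2 append.assoc p1_def p2_def
    by (rule T3[OF B xy cxy, where Y1t="[(g,y)]" and Y1a="[(q,y)]"]) (use Y2y Ys in auto)
  have Tc: "\<forall>z\<in>set (rl y c Y2). snd z = c" using Y2y by (induction Y2) auto
  have Tne: "rl y c Y2 \<noteq> []" using Ys(2) by (cases Y2) auto
  have rxs: "runs xs = 3"
  proof -
    have "runs ([(f1,x)] @ Ys @ [(fn,x)]) = 1 + runs (Ys @ [(fn,x)])"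
      by (rule runs_blk) (use Ys xy in auto)
    moreover have "runs (Ys @ [(fn,x)]) = 1 + runs [(fn,x)]"
      by (rule runs_blk) (use Ys xy in auto)
    ultimately show ?thesis unfolding xs by (simp add: runs1)
  qed
  have mxs: "mu xs = length Ys" unfolding xs
    using mu_split[of "[(f1,x)]" x "[(fn,x)]" x Ys] Ys xy by simp
  have l1: "(p1, xs) \<in> measures M"
  proof (rule lex3)
    show "nlab p1 \<le> nlab xs" unfolding n2 p1_def
      by (rule nlab_le2[of _ x c]) (use Tc in auto)
    have p1e: "p1 = [(q,x),(q,x),(g,x)] @ ((g,c) # rl y c Y2) @ [(fn,x)]" unfolding p1_def by simp
    have "runs p1 = 3" unfolding p1e
    proof -
      have "runs ([(q,x),(q,x),(g,x)] @ ((g,c) # rl y c Y2) @ [(fn,x)]) = 1 + runs (((g,c) # rl y c Y2) @ [(fn,x)])"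
        by (rule runs_blk) (use cxy in auto)
      moreover have "runs (((g,c) # rl y c Y2) @ [(fn,x)]) = 1 + runs [(fn,x)]"
        by (rule runs_blk) (use Tc cxy in auto)
      ultimately show "runs ([(q,x),(q,x),(g,x)] @ ((g,c) # rl y c Y2) @ [(fn,x)]) = 3" by (simp add: runs1)
    qed
    then show "runs p1 \<le> runs xs" using rxs by simp
    have "mu p1 = length ((g,c) # rl y c Y2)" unfolding p1e
      by (rule mu_split[where lu=x and lv=x]) (use Tc Tne cxy in \<open>auto simp: last_in_set\<close>)
    then show "mu p1 < mu xs" using mxs Ys by simp
  qed
  have l2: "(p2, xs) \<in> measures M"
  proof (rule lex3)
    show "nlab p2 \<le> nlab xs" unfolding n2 p2_def by (rule nlab_le2[of _ x y]) auto
    have "runs p2 = 3" unfolding p2_def using xy by (simp add: runs_def)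
    then show "runs p2 \<le> runs xs" using rxs by simp
    have "mu p2 = 2" unfolding p2_def using xy by (simp add: mu_def)
    then show "mu p2 < mu xs" using mxs Ys by simp
  qed
  have ne1: "p1 \<noteq> []" and ne2: "p2 \<noteq> []" unfolding p1_def p2_def by simp_all
  show ?thesis using ea eb H[OF l1 ne1] H[OF l2 ne2] by simp
qed


lemma caseT4a:
  fixes xs :: "('f::finite \<times> nat) list"
  assumes A: "admissible a" and B: "admissible b"
    and H: "\<And>ys. (ys, xs) \<in> measures M \<Longrightarrow> ys \<noteq> [] \<Longrightarrow> a (mkp ys) = b (mkp ys)"
    and xs: "xs = (f1,x) # Ys @ Xs @ [(fn,y)]" and xy: "x \<noteq> y" and n2: "nlab xs = 2"
    and Ys: "Ys = u0 # u1 # Yt" "\<forall>z\<in>set Ys. snd z = y"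
    and Xs: "Xs \<noteq> []" "\<forall>z\<in>set Xs. snd z = x"
  shows "a (mkp xs) = b (mkp xs)"
proof -
  define c where "c = Suc (x + y)"
  have cxy: "c \<noteq> x" "c \<noteq> y" unfolding c_def by auto
  define q where "q = fst u0"
  define g where "g = fst (last Ys)"
  have Ysne: "Ys \<noteq> []" using Ys by simp
  have Y1: "Ys = (q,y) # (u1 # Yt)" using Ys unfolding q_def by (auto simp: prod_eq_iff)
  have "snd (last Ys) = y" using Ys Ysne by simp
  then have lst: "last Ys = (g,y)" unfolding g_def by (simp add: prod_eq_iff)
  have "butlast Ys @ [last Ys] = Ys" by (rule append_butlast_last_id[OF Ysne])
  then have Y2: "Ys = butlast Ys @ [(g,y)]" unfolding lst by simp
  define p1 where "p1 = (q,x) # map (\<lambda>z. (fst z, x)) Ys @ [(g,c)] @ Xs @ [(fn,c)]"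
  define p2 where "p2 = (q,x) # Ys @ Xs"
  have ea: "a (mkp xs) = a (mkp p1) * a (mkp p2)" unfolding xs p1_def p2_def
    by (rule T4a[OF A xy cxy Y1 Y2 Ys(2) Xs(2)])
  have eb: "b (mkp xs) = b (mkp p1) * b (mkp p2)" unfolding xs p1_def p2_def
    by (rule T4a[OF B xy cxy Y1 Y2 Ys(2) Xs(2)])
  have rxs: "runs xs = 4"
  proof -
    have "runs ([(f1,x)] @ Ys @ Xs @ [(fn,y)]) = 1 + runs (Ys @ Xs @ [(fn,y)])"
      by (rule runs_blk) (use Ys xy in auto)
    moreover have "runs (Ys @ Xs @ [(fn,y)]) = 1 + runs (Xs @ [(fn,y)])"
      by (rule runs_blk) (use Ys Xs xy in \<open>auto simp: hd_in_set\<close>)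
    moreover have "runs (Xs @ [(fn,y)]) = 1 + runs [(fn,y)]"
      by (rule runs_blk) (use Xs xy in auto)
    ultimately show ?thesis unfolding xs by (simp add: runs1)
  qed
  have mxs: "mu xs = length Ys + length Xs" unfolding xs
  proof -
    have "mu ([(f1,x)] @ (Ys @ Xs) @ [(fn,y)]) = length (Ys @ Xs)"
      by (rule mu_split[where lu=x and lv=y]) (use Ys Xs xy in \<open>auto simp: hd_in_set\<close>)
    then show "mu ((f1, x) # Ys @ Xs @ [(fn, y)]) = length Ys + length Xs" by simp
  qed
  have l1: "(p1, xs) \<in> measures M"
  proof (rule lex3)
    show "nlab p1 \<le> nlab xs" unfolding n2 p1_def
      by (rule nlab_le2[of _ x c]) (use Xs in auto)
    have p1e: "p1 = ((q,x) # map (\<lambda>z. (fst z, x)) Ys) @ ((g,c) # Xs) @ [(fn,c)]" unfolding p1_def by simp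
    have "runs p1 = 4" unfolding p1e
    proof -
      have "runs (((q,x) # map (\<lambda>z. (fst z, x)) Ys) @ ((g,c) # Xs) @ [(fn,c)]) = 1 + runs (((g,c) # Xs) @ [(fn,c)])"
        by (rule runs_blk) (use cxy in auto)
      moreover have "runs ([(g,c)] @ Xs @ [(fn,c)]) = 1 + runs (Xs @ [(fn,c)])"
        by (rule runs_blk) (use Xs cxy in \<open>auto simp: hd_in_set\<close>)
      moreover have "runs (Xs @ [(fn,c)]) = 1 + runs [(fn,c)]"
        by (rule runs_blk) (use Xs cxy in auto)
      ultimately show "runs (((q,x) # map (\<lambda>z. (fst z, x)) Ys) @ ((g,c) # Xs) @ [(fn,c)]) = 4" by (simp add: runs1)
    qed
    then show "runs p1 \<le> runs xs" using rxs by simp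
    have "mu p1 = length ((g,c) # Xs)" unfolding p1e
      by (rule mu_split[where lu=x and lv=c]) (use Xs cxy in auto)
    then show "mu p1 < mu xs" using mxs Ys by simp
  qed
  have l2: "(p2, xs) \<in> measures M"
  proof (rule lex2)
    show "nlab p2 \<le> nlab xs" unfolding n2 p2_def by (rule nlab_le2[of _ x y]) (use Ys Xs in auto)
    have "runs ([(q,x)] @ Ys @ Xs) = 1 + runs (Ys @ Xs)"
      by (rule runs_blk) (use Ys xy in auto)
    moreover have "runs (Ys @ Xs) = 1 + runs Xs"
      by (rule runs_blk) (use Ys Xs xy in \<open>auto simp: hd_in_set\<close>)
    ultimately have "runs p2 = 3" unfolding p2_def using runs_const[OF Xs] by simp
    then show "runs p2 < runs xs" using rxs by simp
  qed
  have ne1: "p1 \<noteq> []" and ne2: "p2 \<noteq> []" unfolding p1_def p2_def by simp_all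
  show ?thesis using ea eb H[OF l1 ne1] H[OF l2 ne2] by simp
qed

lemma caseT4b:
  fixes xs :: "('f::finite \<times> nat) list"
  assumes A: "admissible a" and B: "admissible b"
    and H: "\<And>ys. (ys, xs) \<in> measures M \<Longrightarrow> ys \<noteq> [] \<Longrightarrow> a (mkp ys) = b (mkp ys)"
    and xs: "xs = (f1,x) # (q,y) # Xs @ [(fn,y)]" and xy: "x \<noteq> y" and n2: "nlab xs = 2"
    and Xs: "Xs = u0 # u1 # Xt" "\<forall>z\<in>set Xs. snd z = x"
  shows "a (mkp xs) = b (mkp xs)"
proof -
  define c where "c = Suc (x + y)"
  have cxy: "c \<noteq> x" "c \<noteq> y" unfolding c_def by auto
  define h where "h = fst u0"
  define e where "e = fst (last Xs)"
  have Xsne: "Xs \<noteq> []" using Xs by simp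
  have X1: "Xs = (h,x) # (u1 # Xt)" using Xs unfolding h_def by (auto simp: prod_eq_iff)
  have "snd (last Xs) = x" using Xs Xsne by simp
  then have lst: "last Xs = (e,x)" unfolding e_def by (simp add: prod_eq_iff)
  have "butlast Xs @ [last Xs] = Xs" by (rule append_butlast_last_id[OF Xsne])
  then have X2: "Xs = butlast Xs @ [(e,x)]" unfolding lst by simp
  define p1 where "p1 = (f1,c) # (q,x) # (h,c) # Xs @ [(e,x)]"
  define p2 where "p2 = (q,y) # Xs @ [(e,y)]"
  have ea: "a (mkp xs) = a (mkp p1) * a (mkp p2)" unfolding xs p1_def p2_def
    by (rule T4b[OF A xy cxy X1 X2 Xs(2)])
  have eb: "b (mkp xs) = b (mkp p1) * b (mkp p2)" unfolding xs p1_def p2_def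
    by (rule T4b[OF B xy cxy X1 X2 Xs(2)])
  have rxs: "runs xs = 4"
  proof -
    have "runs ([(f1,x)] @ [(q,y)] @ Xs @ [(fn,y)]) = 1 + runs ([(q,y)] @ Xs @ [(fn,y)])"
      by (rule runs_blk) (use xy in auto)
    moreover have "runs ([(q,y)] @ Xs @ [(fn,y)]) = 1 + runs (Xs @ [(fn,y)])"
      by (rule runs_blk) (use Xs xy in auto)
    moreover have "runs (Xs @ [(fn,y)]) = 1 + runs [(fn,y)]"
      by (rule runs_blk) (use Xs xy in auto)
    ultimately show ?thesis unfolding xs by (simp add: runs1)
  qed
  have mxs: "mu xs = 1 + length Xs" unfolding xs
  proof -
    have "mu ([(f1,x)] @ ((q,y) # Xs) @ [(fn,y)]) = length ((q,y) # Xs)"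
      by (rule mu_split[where lu=x and lv=y]) (use Xs xy in auto)
    then show "mu ((f1,x) # (q,y) # Xs @ [(fn,y)]) = 1 + length Xs" by simp
  qed
  have l1: "(p1, xs) \<in> measures M"
  proof (rule lex3)
    show "nlab p1 \<le> nlab xs" unfolding n2 p1_def
      by (rule nlab_le2[of _ x c]) (use Xs in auto)
    have p1e: "p1 = [(f1,c)] @ [(q,x),(h,c)] @ (Xs @ [(e,x)])" unfolding p1_def by simp
    have "runs p1 = 4"
    proof -
      have r0: "runs (Xs @ [(e,x)]) = 1" by (rule runs_const[where l=x]) (use Xs in auto)
      have "runs ([(h,c)] @ (Xs @ [(e,x)])) = 1 + runs (Xs @ [(e,x)])"
        by (rule runs_blk) (use Xs cxy in auto)
      moreover have "runs ([(q,x)] @ ((h,c) # Xs @ [(e,x)])) = 1 + runs ((h,c) # Xs @ [(e,x)])"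
        by (rule runs_blk) (use cxy in auto)
      moreover have "runs ([(f1,c)] @ ((q,x) # (h,c) # Xs @ [(e,x)])) = 1 + runs ((q,x) # (h,c) # Xs @ [(e,x)])"
        by (rule runs_blk) (use cxy in auto)
      ultimately show ?thesis unfolding p1_def using r0 by simp
    qed
    then show "runs p1 \<le> runs xs" using rxs by simp
    have "mu p1 = length [(q,x),(h,c)]" unfolding p1e
      by (rule mu_split[where lu=c and lv=x]) (use Xs cxy in auto)
    then show "mu p1 < mu xs" using mxs Xs by simp
  qed
  have l2: "(p2, xs) \<in> measures M"
  proof (rule lex2)
    show "nlab p2 \<le> nlab xs" unfolding n2 p2_def by (rule nlab_le2[of _ x y]) (use Xs in auto)
    have "runs ([(q,y)] @ Xs @ [(e,y)]) = 1 + runs (Xs @ [(e,y)])"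
      by (rule runs_blk) (use Xs xy in auto)
    moreover have "runs (Xs @ [(e,y)]) = 1 + runs [(e,y)]"
      by (rule runs_blk) (use Xs xy in auto)
    ultimately have "runs p2 = 3" unfolding p2_def by (simp add: runs1)
    then show "runs p2 < runs xs" using rxs by simp
  qed
  have ne1: "p1 \<noteq> []" and ne2: "p2 \<noteq> []" unfolding p1_def p2_def by simp_all
  show ?thesis using ea eb H[OF l1 ne1] H[OF l2 ne2] by simp
qed




lemma last2:
  assumes "zs @ [w1,w2] = us @ vs" "length vs \<ge> 2"
  shows "\<exists>vs'. vs = vs' @ [w1,w2]"
proof -
  obtain vs1 v2 where v2: "vs = vs1 @ [v2]" using assms(2) by (cases vs rule: rev_cases) auto
  obtain vs' v1 where v1: "vs1 = vs' @ [v1]" using assms(2) v2 by (cases vs1 rule: rev_cases) auto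
  have "zs @ [w1,w2] = (us @ vs') @ [v1,v2]" using assms(1) v1 v2 by simp
  then have "[w1,w2] = [v1,v2]" by (subst (asm) append_eq_append_conv) auto
  then show ?thesis using v1 v2 by auto
qed

lemma labs_two:
  assumes "nlab xs = 2" "x \<in> snd ` set xs" "y \<in> snd ` set xs" "x \<noteq> y"
  shows "\<forall>z\<in>set xs. snd z \<in> {x,y}"
proof -
  have "{x,y} \<subseteq> snd ` set xs" using assms by auto
  moreover have "card {x,y} = card (snd ` set xs)" using assms(1,4) by (simp add: nlab_def)
  ultimately have "{x,y} = snd ` set xs" by (intro card_subset_eq) auto
  then show ?thesis by auto
qed

lemma core:
  fixes xs :: "('f::finite \<times> nat) list"
  assumes A: "admissible a" and B: "admissible b"
    and basic: "\<forall>q Q. nu1 a q = nu1 b q \<and> nu2 a q Q = nu2 b q Q \<and> xi2 a q Q = xi2 b q Q"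
    and H: "\<And>ys. (ys, xs) \<in> measures M \<Longrightarrow> ys \<noteq> [] \<Longrightarrow> a (mkp ys) = b (mkp ys)"
    and xs: "xs = (f1,x) # rest" "rest \<noteq> []" "snd (hd rest) = y" and xy: "x \<noteq> y" and n2: "nlab xs = 2"
    and LL: "xs = zs @ [w1,w2]" "snd w1 \<noteq> snd w2"
  shows "a (mkp xs) = b (mkp xs)"
proof -
  have lab: "\<forall>z\<in>set xs. snd z \<in> {x,y}"
    by (rule labs_two[OF n2 _ _ xy]) (use xs in \<open>auto intro!: image_eqI[of _ snd] hd_in_set\<close>)
  have noLL: "False" if h: "xs = us @ vs" "length vs \<ge> 2" "\<forall>z\<in>set vs. snd z = l" for us vs l
  proof -
    obtain vs' where "vs = vs' @ [w1,w2]" using last2[of zs w1 w2 us vs] LL(1) h(1,2) by auto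
    then show False using h(3) LL(2) by auto
  qed
  define Ys where "Ys = takeWhile (\<lambda>z. snd z = y) rest"
  define R2 where "R2 = dropWhile (\<lambda>z. snd z = y) rest"
  have rest: "rest = Ys @ R2" unfolding Ys_def R2_def by simp
  have Ysy: "\<forall>z\<in>set Ys. snd z = y" unfolding Ys_def by (auto dest: set_takeWhileD)
  have Ysne: "Ys \<noteq> []" unfolding Ys_def using xs(2,3) by (cases rest) auto
  show ?thesis
  proof (cases "R2 = []")
    case True
    then have xs1: "xs = [(f1,x)] @ Ys" using xs rest by simp
    obtain u where Yu: "Ys = [u]"
    proof (cases Ys)
      case (Cons u r)
      show ?thesis
      proof (cases r)
        case Nil then show ?thesis using Cons that by simp
      next
        case (Cons v r') then have "length Ys \<ge> 2" using \<open>Ys = u # r\<close> by simp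
        then show ?thesis using noLL[OF xs1 _ Ysy] by simp
      qed
    qed (use Ysne in simp)
    have "xs = [(f1,x),(fst u, y)]" using xs1 Yu Ysy by (cases u) simp
    then show ?thesis using adm_two[OF A xy] adm_two[OF B xy] by simp
  next
    case False
    have hR2: "snd (hd R2) = x"
    proof -
      have "dropWhile (\<lambda>z. snd z = y) rest \<noteq> []" using False by (simp add: R2_def)
        from hd_dropWhile[OF this] have "snd (hd R2) \<noteq> y" by (simp add: R2_def)
      moreover have "hd R2 \<in> set xs" using False xs rest by (auto simp: hd_in_set)
      ultimately show ?thesis using lab by auto
    qed
    define Xs where "Xs = takeWhile (\<lambda>z. snd z = x) R2"
    define R3 where "R3 = dropWhile (\<lambda>z. snd z = x) R2"
    have R2e: "R2 = Xs @ R3" unfolding Xs_def R3_def by simp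
    have Xsx: "\<forall>z\<in>set Xs. snd z = x" unfolding Xs_def by (auto dest: set_takeWhileD)
    have Xsne: "Xs \<noteq> []" unfolding Xs_def using False hR2 by (cases R2) auto
    show ?thesis
    proof (cases "R3 = []")
      case True
      then have xs2: "xs = ((f1,x) # Ys) @ Xs" using xs rest R2e by simp
      obtain fn where Xfn: "Xs = [(fn,x)]"
      proof (cases Xs)
        case (Cons u r)
        show ?thesis
        proof (cases r)
          case Nil then show ?thesis using Cons that Xsx by (cases u) simp
        next
          case (Cons v r') then have "length Xs \<ge> 2" using \<open>Xs = u # r\<close> by simp
          then show ?thesis using noLL[OF xs2 _ Xsx] by simp
        qed
      qed (use Xsne in simp)
      have xs3: "xs = (f1,x) # Ys @ [(fn,x)]" using xs2 Xfn by simp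
      show ?thesis
      proof (cases Ys)
        case Nil then show ?thesis using Ysne by simp
      next
        case (Cons u0 r0)
        show ?thesis
        proof (cases r0)
          case Nil
          have "a (mkp xs) = a (mkp [(fst u0,x),(fst u0,y),(fst u0,x)])" if "admissible a" for a
          proof -
            have "a (mkp xs) = a (mkp ((f1,x) # [(fst u0,y),(fn,x)]))" using xs3 Cons Nil Ysy by (cases u0) simp
            also have "\<dots> = a (mkp ((fst u0,x) # [(fst u0,y),(fn,x)]))" by (rule adm_first[OF that])
            also have "\<dots> = a (mkp ([(fst u0,x),(fst u0,y)] @ [(fn,x)]))" by simp
            also have "\<dots> = a (mkp ([(fst u0,x),(fst u0,y)] @ [(fst u0,x)]))" by (rule adm_last[OF that])
            finally show ?thesis by simp
          qed
          note ee = this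
            have "a (mkp xs) = nu1 a (fst u0)" using ee[OF A] basic_nu1[OF xy] by simp
            moreover have "b (mkp xs) = nu1 b (fst u0)" using ee[OF B] basic_nu1[OF xy] by simp
            ultimately show ?thesis using basic by simp
        next
          case (Cons u1 r1)
          show ?thesis
          proof (cases r1)
            case Nil
            have "a (mkp xs) = a (mkp [(fst u0,x),(fst u0,y),(fst u1,y),(fst u1,x)])" if "admissible a" for a
            proof -
              have "a (mkp xs) = a (mkp ((f1,x) # [(fst u0,y),(fst u1,y),(fn,x)]))"
                using xs3 \<open>Ys = u0 # r0\<close> Cons Nil Ysy by (cases u0, cases u1) simp
              also have "\<dots> = a (mkp ((fst u0,x) # [(fst u0,y),(fst u1,y),(fn,x)]))" by (rule adm_first[OF that])
              also have "\<dots> = a (mkp ([(fst u0,x),(fst u0,y),(fst u1,y)] @ [(fn,x)]))" by simp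
              also have "\<dots> = a (mkp ([(fst u0,x),(fst u0,y),(fst u1,y)] @ [(fst u1,x)]))" by (rule adm_last[OF that])
              finally show ?thesis by simp
            qed
            note ee = this
            have "a (mkp xs) = nu2 a (fst u0) (fst u1)" using ee[OF A] basic_nu2[OF xy] by simp
            moreover have "b (mkp xs) = nu2 b (fst u0) (fst u1)" using ee[OF B] basic_nu2[OF xy] by simp
            ultimately show ?thesis using basic by simp
          next
            case (Cons u2 r2)
            show ?thesis
              by (rule caseT3[OF A B H xs3 xy n2, of u0 u1 "u2 # r2"])
                 (use \<open>Ys = u0 # r0\<close> \<open>r0 = u1 # r1\<close> Cons Ysy in auto)
          qed
        qed
      qed
    next
      case False
      have hR3: "snd (hd R3) = y"
      proof -
        have "dropWhile (\<lambda>z. snd z = x) R2 \<noteq> []" using False by (simp add: R3_def)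
        from hd_dropWhile[OF this] have "snd (hd R3) \<noteq> x" by (simp add: R3_def)
        moreover have "hd R3 \<in> set xs" using False xs rest R2e by (auto simp: hd_in_set)
        ultimately show ?thesis using lab by auto
      qed
      define Zs where "Zs = takeWhile (\<lambda>z. snd z = y) R3"
      define R4 where "R4 = dropWhile (\<lambda>z. snd z = y) R3"
      have R3e: "R3 = Zs @ R4" unfolding Zs_def R4_def by simp
      have Zsy: "\<forall>z\<in>set Zs. snd z = y" unfolding Zs_def by (auto dest: set_takeWhileD)
      have Zsne: "Zs \<noteq> []" unfolding Zs_def using False hR3 by (cases R3) auto
      show ?thesis
      proof (cases "R4 = []")
        case True
        then have xs2: "xs = ((f1,x) # Ys @ Xs) @ Zs" using xs rest R2e R3e by simp
        obtain fn where Zfn: "Zs = [(fn,y)]"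
        proof (cases Zs)
          case (Cons u r)
          show ?thesis
          proof (cases r)
            case Nil then show ?thesis using Cons that Zsy by (cases u) simp
          next
            case (Cons v r') then have "length Zs \<ge> 2" using \<open>Zs = u # r\<close> by simp
            then show ?thesis using noLL[OF xs2 _ Zsy] by simp
          qed
        qed (use Zsne in simp)
        have xs3: "xs = (f1,x) # Ys @ Xs @ [(fn,y)]" using xs2 Zfn by simp
        show ?thesis
        proof (cases "length Ys \<ge> 2")
          case True
          then obtain u0 u1 Yt where "Ys = u0 # u1 # Yt" by (auto simp: Suc_le_length_iff numeral_2_eq_2)
          then show ?thesis using caseT4a[OF A B H xs3 xy n2 _ Ysy Xsne Xsx] by blast
        next
          case False
          obtain u where Yu: "Ys = [u]"
          proof (cases Ys)
            case (Cons u' r)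
            then have "r = []" using False by (cases r) auto
            then show ?thesis using that Cons by simp
          qed (use Ysne in simp)
          have xs4: "xs = (f1,x) # (fst u, y) # Xs @ [(fn,y)]" using xs3 Yu Ysy by (cases u) simp
          show ?thesis
          proof (cases "length Xs \<ge> 2")
            case True
            then obtain v0 v1 Xt where "Xs = v0 # v1 # Xt" by (auto simp: Suc_le_length_iff numeral_2_eq_2)
            then show ?thesis using caseT4b[OF A B H xs4 xy n2 _ Xsx] by blast
          next
            case False
            obtain v where Xv: "Xs = [v]"
          proof (cases Xs)
            case (Cons u' r)
            then have "r = []" using False by (cases r) auto
            then show ?thesis using that Cons by simp
          qed (use Xsne in simp)
            have "a (mkp xs) = a (mkp [(fst u,x),(fst u,y),(fst v,x),(fst v,y)])" if "admissible a" for a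
            proof -
              have "a (mkp xs) = a (mkp ((f1,x) # [(fst u,y),(fst v,x),(fn,y)]))"
                using xs4 Xv Xsx by (cases v) simp
              also have "\<dots> = a (mkp ((fst u,x) # [(fst u,y),(fst v,x),(fn,y)]))" by (rule adm_first[OF that])
              also have "\<dots> = a (mkp ([(fst u,x),(fst u,y),(fst v,x)] @ [(fn,y)]))" by simp
              also have "\<dots> = a (mkp ([(fst u,x),(fst u,y),(fst v,x)] @ [(fst v,y)]))" by (rule adm_last[OF that])
              finally show ?thesis by simp
            qed
            note ee = this
            have "a (mkp xs) = xi2 a (fst u) (fst v)" using ee[OF A] basic_xi2[OF xy] by simp
            moreover have "b (mkp xs) = xi2 b (fst u) (fst v)" using ee[OF B] basic_xi2[OF xy] by simp
            ultimately show ?thesis using basic by simp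
          qed
        qed
      next
        case False
        have hR4: "snd (hd R4) = x"
        proof -
          have "dropWhile (\<lambda>z. snd z = y) R3 \<noteq> []" using False by (simp add: R4_def)
        from hd_dropWhile[OF this] have "snd (hd R4) \<noteq> y" by (simp add: R4_def)
          moreover have "hd R4 \<in> set xs" using False xs rest R2e R3e by (auto simp: hd_in_set)
          ultimately show ?thesis using lab by auto
        qed
        have xs5: "xs = (f1,x) # Ys @ Xs @ R3" using xs rest R2e by simp
        have R3l: "\<forall>z\<in>set R3. snd z \<in> {x,y}" using lab xs5 by auto
        have "length R3 \<ge> 2" using R3e Zsne False by (cases Zs; cases R4) auto
        then obtain S0 where S0: "R3 = S0 @ [w1,w2]"
          using last2[of zs w1 w2 "(f1,x) # Ys @ Xs" R3] LL(1) xs5 by auto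
        show ?thesis
          by (rule caseT5[OF A B H xs5 xy n2 Ysne Ysy Xsne Xsx R3e Zsne Zsy False hR4 R3l,
                 of S0 "fst w1" "snd w1" "fst w2" "snd w2"])
             (use S0 LL(2) in auto)
      qed
    qed
  qed
qed




lemma rl_labs_sub: "snd ` set (rl a b xs) \<subseteq> (snd ` set xs - {a}) \<union> {b}"
  by (induction xs) auto

lemma main_ind:
  fixes a b :: "('f::finite) mfpart \<Rightarrow> complex"
  assumes A: "admissible a" and B: "admissible b"
    and basic: "\<forall>q Q. nu1 a q = nu1 b q \<and> nu2 a q Q = nu2 b q Q \<and> xi2 a q Q = xi2 b q Q"
  shows "(xs :: ('f \<times> nat) list) \<noteq> [] \<Longrightarrow> a (mkp xs) = b (mkp xs)"
proof (induction xs rule: wf_induct[OF wf_measures[of M]])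
  case (1 xs)
  have H: "\<And>ys. (ys, xs) \<in> measures M \<Longrightarrow> ys \<noteq> [] \<Longrightarrow> a (mkp ys) = b (mkp ys)" using 1 by blast
  have ne: "xs \<noteq> []" by fact
  show ?case
  proof (cases "nlab xs \<ge> 2")
    case False
    obtain z0 where z0: "z0 \<in> set xs" using ne by (cases xs) auto
    have "card (snd ` set xs) \<le> Suc 0" using False by (simp add: nlab_def)
    then have "\<forall>u\<in>snd ` set xs. \<forall>v\<in>snd ` set xs. u = v"
      using card_le_Suc0_iff_eq[of "snd ` set xs"] by blast
    then have all: "\<forall>z\<in>set xs. snd z = snd z0" using z0 by blast
    show ?thesis using adm_one[OF A ne all] adm_one[OF B ne all] by simp
  next
    case True
    obtain z1 z2 ys where xs: "xs = z1 # z2 # ys"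
    proof (cases xs)
      case (Cons z1 r)
      show ?thesis
      proof (cases r)
        case Nil
        then have "nlab xs = 1" using Cons by (simp add: nlab_def)
        then show ?thesis using True by simp
      next
        case (Cons z2 ys) then show ?thesis using that \<open>xs = z1 # r\<close> by simp
      qed
    qed (use ne in simp)
    show ?thesis
    proof (cases "snd z1 = snd z2")
      case True
      have e: "c (mkp xs) = c (mkp (z2 # ys))" if "admissible c" for c
        using adm_rm1[OF that, of "fst z1" "snd z1" "fst z2" ys] xs True by (cases z1, cases z2) simp
      have "(z2 # ys, xs) \<in> measures M" unfolding xs
        using rm1_meas[OF True] \<open>nlab xs \<ge> 2\<close> xs by (intro lex4) auto
      then show ?thesis using H e[OF A] e[OF B] by simp
    next
      case False
      show ?thesis
      proof (cases "nlab xs \<ge> 3")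
        case True
        define xs' where "xs' = (fst z2, snd z1) # z2 # ys"
        have e0: "c (mkp xs) = c (mkp xs')" if "admissible c" for c
          unfolding xs xs'_def using adm_first[OF that, of "fst z1" "snd z1" "z2 # ys" "fst z2"] by simp
        have s: "xs' = [] @ [(fst z2, snd z1), (fst z2, snd z2)] @ ys" unfolding xs'_def by simp
        have e1: "c (mkp xs') = c (mkp (rl (snd z2) (snd z1) xs')) * c (mkp (filter (\<lambda>z. snd z \<in> {snd z1, snd z2}) xs'))"
          if "admissible c" for c
          by (rule adm_merge[OF that s False]) auto
        have L: "snd ` set xs' = snd ` set xs" unfolding xs xs'_def by auto
        have fin: "finite (snd ` set xs)" by simp
        have l1: "(rl (snd z2) (snd z1) xs', xs) \<in> measures M"
        proof (rule lex1)
          have "snd ` set (rl (snd z2) (snd z1) xs') \<subseteq> snd ` set xs - {snd z2}"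
          proof -
            have "snd z1 \<in> snd ` set xs" unfolding xs by simp
            note h1 = this
            show ?thesis
            proof
              fix l assume "l \<in> snd ` set (rl (snd z2) (snd z1) xs')"
              then have "l \<in> (snd ` set xs' - {snd z2}) \<union> {snd z1}" by (rule subsetD[OF rl_labs_sub])
              then show "l \<in> snd ` set xs - {snd z2}"
                using h1 L \<open>snd z1 \<noteq> snd z2\<close> by (cases "l = snd z1") auto
            qed
          qed
          then have "card (snd ` set (rl (snd z2) (snd z1) xs')) \<le> card (snd ` set xs - {snd z2})"
            by (rule card_mono[rotated]) simp
          also have "\<dots> < card (snd ` set xs)" using fin xs by (intro psubset_card_mono) auto
          finally show "nlab (rl (snd z2) (snd z1) xs') < nlab xs" by (simp add: nlab_def)
        qed
        have l2: "(filter (\<lambda>z. snd z \<in> {snd z1, snd z2}) xs', xs) \<in> measures M"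
        proof (rule lex1)
          have "nlab (filter (\<lambda>z. snd z \<in> {snd z1, snd z2}) xs') \<le> 2" by (rule nlab_le2) auto
          then show "nlab (filter (\<lambda>z. snd z \<in> {snd z1, snd z2}) xs') < nlab xs" using True by simp
        qed
        have ne1: "rl (snd z2) (snd z1) xs' \<noteq> []" unfolding xs'_def by simp
        have ne2: "filter (\<lambda>z. snd z \<in> {snd z1, snd z2}) xs' \<noteq> []" unfolding xs'_def by simp
        show ?thesis using e0[OF A] e0[OF B] e1[OF A] e1[OF B] H[OF l1 ne1] H[OF l2 ne2] by simp
      next
        case False
        then have n2: "nlab xs = 2" using \<open>nlab xs \<ge> 2\<close> by simp
        obtain zs w1 w2 where zw: "xs = zs @ [w1, w2]"
        proof -
          obtain r1 w2 where "xs = r1 @ [w2]" using ne by (cases xs rule: rev_cases) auto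
          moreover obtain zs w1 where "r1 = zs @ [w1]" using xs calculation by (cases r1 rule: rev_cases) auto
          ultimately show ?thesis using that by simp
        qed
        show ?thesis
        proof (cases "snd w1 = snd w2")
          case True
          have e: "c (mkp xs) = c (mkp (zs @ [w1]))" if "admissible c" for c
            using adm_rmL[OF that, of zs "fst w1" "snd w1" "fst w2"] zw True by (cases w1, cases w2) simp
          have "(zs @ [w1], xs) \<in> measures M" unfolding zw
            using rmL_meas[OF True] \<open>nlab xs \<ge> 2\<close> zw by (intro lex4) auto
          then show ?thesis using H e[OF A] e[OF B] by simp
        next
          case False
          have xsr: "xs = (fst z1, snd z1) # (z2 # ys)" by (simp add: xs)
          have rne: "z2 # ys \<noteq> []" by simp
          have hd2: "snd (hd (z2 # ys)) = snd z2" by simp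
          show ?thesis by (rule core[OF A B basic H xsr rne hd2 \<open>snd z1 \<noteq> snd z2\<close> n2 zw False])
        qed
      qed
    qed
  qed
qed

lemma mfparts_mkp:
  assumes "(w, p) \<in> mfparts"
  shows "\<exists>xs :: ('f::finite \<times> nat) list. xs \<noteq> [] \<and> mkp xs = (w, p)"
proof -
  have P: "partition_on {1..length w} p" and lw: "length w \<ge> 1" using assms by (auto simp: mfparts_def)
  let ?n = "length w"
  have ex1: "\<exists>!B. B \<in> p \<and> i \<in> B" if "i \<in> {1..?n}" for i
  proof -
    have "i \<in> \<Union>p" using that by (simp only: partition_onD1[OF P, symmetric])
    then obtain B where B: "B \<in> p" "i \<in> B" by (rule UnionE)
    moreover have "B' = B" if "B' \<in> p" "i \<in> B'" for B'
      using partition_onD2[OF P] B that by (auto simp: disjoint_def)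
    ultimately show ?thesis by blast
  qed
  define bo where "bo i = (THE B. B \<in> p \<and> i \<in> B)" for i
  have bo: "bo i \<in> p" "i \<in> bo i" if "i \<in> {1..?n}" for i
    using theI'[OF ex1[OF that]] unfolding bo_def by auto
  have bo_eq: "bo i = B" if "i \<in> {1..?n}" "B \<in> p" "i \<in> B" for i B
    using ex1[OF that(1)] bo[OF that(1)] that(2,3) by blast
  have nonemp: "B \<noteq> {}" if "B \<in> p" for B using partition_onD3[OF P] that by auto
  have sub: "B \<subseteq> {1..?n}" if "B \<in> p" for B using partition_onD1[OF P] that by auto
  have fin: "finite B" if "B \<in> p" for B
    by (rule finite_subset[OF sub[OF that]]) simp
  define ys :: "('f \<times> nat set) list" where "ys = map (\<lambda>i. (w!(i-1), bo i)) [1..<Suc ?n]"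
  have lys: "length ys = ?n" unfolding ys_def by (simp del: upt_Suc)
  have ysi: "ys!(i-1) = (w!(i-1), bo i)" if "i \<in> {1..?n}" for i
  proof -
    have "i - 1 < ?n" using that by auto
    then have "[1..<Suc ?n] ! (i-1) = i" using that by (simp del: upt_Suc)
    then show ?thesis unfolding ys_def using \<open>i - 1 < ?n\<close> by (simp del: upt_Suc)
  qed
  have fys: "map fst ys = w"
  proof -
    have "map fst ys = map (\<lambda>i. w!(i-1)) [1..<Suc ?n]" unfolding ys_def by (simp del: upt_Suc)
    also have "\<dots> = w" by (rule map_nth_shift)
    finally show ?thesis .
  qed
  have labs: "snd ` set ys = p"
  proof (intro equalityI subsetI)
    fix B assume "B \<in> snd ` set ys"
    then obtain i where "i \<in> {1..?n}" "B = bo i" unfolding ys_def by (auto simp: less_Suc_eq_le simp del: upt_Suc)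
    then show "B \<in> p" using bo by simp
  next
    fix B assume B: "B \<in> p"
    then obtain i where i: "i \<in> B" using nonemp by blast
    then have iA: "i \<in> {1..?n}" using sub[OF B] by blast
    have "bo i = B" using bo_eq[OF iA B i] .
    moreover have "(w!(i-1), bo i) \<in> set ys" unfolding ys_def using iA by (force simp del: upt_Suc)
    ultimately show "B \<in> snd ` set ys" by force
  qed
  have blks: "blk ys B = B" if "B \<in> p" for B
  proof (intro equalityI subsetI)
    fix i assume "i \<in> blk ys B"
    then have iA: "i \<in> {1..?n}" and "snd (ys!(i-1)) = B" using lys by auto
    then have "bo i = B" using ysi[OF iA] by simp
    then show "i \<in> B" using bo[OF iA] by simp
  next
    fix i assume i: "i \<in> B"
    then have iA: "i \<in> {1..?n}" using sub[OF that] by blast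
    then show "i \<in> blk ys B" using ysi[OF iA] bo_eq[OF iA that i] lys by simp
  qed
  have m0: "mkp ys = (w, p)"
  proof -
    have "(\<lambda>c. blk ys c) ` snd ` set ys = p" unfolding labs using blks by (auto simp: image_iff)
    then show ?thesis unfolding mkp_def fys by (simp add: labs)
  qed
  have inj: "inj_on Min (snd ` set ys)"
  proof (rule inj_onI)
    fix B1 B2 assume "B1 \<in> snd ` set ys" "B2 \<in> snd ` set ys" "Min B1 = Min B2"
    then have B: "B1 \<in> p" "B2 \<in> p" "Min B1 = Min B2" using labs by auto
    have "Min B1 \<in> B1" "Min B2 \<in> B2" using Min_in[OF fin[OF B(1)] nonemp[OF B(1)]] Min_in[OF fin[OF B(2)] nonemp[OF B(2)]] by simp_all
    then have "Min B1 \<in> B1 \<inter> B2" using B by simp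
    then show "B1 = B2" using partition_onD2[OF P] B by (auto simp: disjoint_def)
  qed
  define xs :: "('f \<times> nat) list" where "xs = map (\<lambda>z. (fst z, Min (snd z))) ys"
  have "mkp xs = mkp ys" unfolding xs_def by (rule mkp_relabel[OF inj])
  moreover have "xs \<noteq> []" unfolding xs_def ys_def using lw by (cases w) (auto simp del: upt_Suc)
  ultimately show ?thesis using m0 by auto
qed




theorem corollary6p6:
  fixes a b :: "('f::finite) mfpart \<Rightarrow> complex"
  assumes "admissible a" and "admissible b"
  shows "(\<forall>x\<in>mfparts. a x = b x) \<longleftrightarrow>
         (\<forall>q Q. nu1 a q = nu1 b q \<and> xi1 a q = xi1 b q \<and>
                nu2 a q Q = nu2 b q Q \<and> xi2 a q Q = xi2 b q Q)"
proof
  assume E: "\<forall>x\<in>mfparts. a x = b x"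
  have z: "(0::nat) \<noteq> 1" by simp
  have xi: "xi1 c q = xi2 c q q" for c :: "'f mfpart \<Rightarrow> complex" and q by (simp add: xi1_def xi2_def)
  show "\<forall>q Q. nu1 a q = nu1 b q \<and> xi1 a q = xi1 b q \<and> nu2 a q Q = nu2 b q Q \<and> xi2 a q Q = xi2 b q Q"
  proof (intro allI conjI)
    fix q Q
    show "nu1 a q = nu1 b q"
      using basic_nu1[OF z, of a q] basic_nu1[OF z, of b q] E mkp_mfparts[of "[(q,0::nat),(q,1),(q,0)]"] by simp
    show "nu2 a q Q = nu2 b q Q"
      using basic_nu2[OF z, of a q Q] basic_nu2[OF z, of b q Q] E mkp_mfparts[of "[(q,0::nat),(q,1),(Q,1),(Q,0)]"] by simp
    show "xi2 a q Q = xi2 b q Q"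
      using basic_xi2[OF z, of a q Q] basic_xi2[OF z, of b q Q] E mkp_mfparts[of "[(q,0::nat),(q,1),(Q,0),(Q,1)]"] by simp
    show "xi1 a q = xi1 b q"
      using basic_xi2[OF z, of a q q] basic_xi2[OF z, of b q q] E mkp_mfparts[of "[(q,0::nat),(q,1),(q,0),(q,1)]"]
      by (simp add: xi)
  qed
next
  assume "\<forall>q Q. nu1 a q = nu1 b q \<and> xi1 a q = xi1 b q \<and> nu2 a q Q = nu2 b q Q \<and> xi2 a q Q = xi2 b q Q"
  then have basic: "\<forall>q Q. nu1 a q = nu1 b q \<and> nu2 a q Q = nu2 b q Q \<and> xi2 a q Q = xi2 b q Q" by simp
  show "\<forall>x\<in>mfparts. a x = b x"
  proof
    fix x :: "'f mfpart" assume x: "x \<in> mfparts"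
    obtain w p where wp: "x = (w, p)" by (cases x)
    obtain xs :: "('f \<times> nat) list" where "xs \<noteq> []" "mkp xs = (w, p)" using mfparts_mkp[of w p] x wp by auto
    then show "a x = b x" using main_ind[OF assms basic] wp by metis
  qed
qed



end
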